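(* The function \[ F_0(k,a,b,c,d) = (-1)^{c+d}\,\frac{\Gamma(a+k)\Gamma(b+k)}{\Gamma(c+k)\Gamma(d+k)}\cdot\frac{\Gamma(a+b-c-d+2)}{\Gamma(a-c+1)\Gamma(a-d+1)\Gamma(b-c+1)\Gamma(b-d+1)} \] is a WZ seed in the variables $a,b,c,d$.
   Context: A term $F(n_1,\dots,n_r)$ is hypergeometric in $n_1,\dots,n_r$ if each ratio $F(\dots,n_i+1,\dots)/F(\dots,n_i,\dots)$ is a rational function of $n_1,\dots,n_r$. Write $\Delta_n f(n)=f(n+1)-f(n)$. Two hypergeometric terms $F(n,k),G(n,k)$ form a WZ pair, and $G$ is called a WZ mate of $F$, if $\Delta_n F(n,k)=\Delta_k G(n,k)$. A hypergeometric term $F_0(k,a,b,\dots)$ (hypergeometric in $k,a,b,\dots$) is a WZ seed in the variables $a,b,\dots$ if for all integers $K,A,B,\dots$ and all complex $k_0$ and all values of the parameters $a,b,\dots$, the term $F(n,k)=F_0(Kn+k_0+k,\,An+a,\,Bn+b,\dots)$ has a WZ mate $G(n,k)$ (a hypergeometric term). Factors such as $(-1)^x$ or $z^x$ with non-integer exponent $x$ are understood as hypergeometric factors satisfying $(-1)^{x+1}=-(-1)^x$, $z^{x+1}=z\cdot z^x$ (e.g. defined via a fixed branch of the exponential). *)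

theory Defs
  imports "HOL-Analysis.Analysis"
begin

text \<open>Bivariate polynomials with complex coefficients are represented as
  nested univariate polynomials; \<open>poly2 P x y\<close> evaluates \<open>P\<close> at \<open>(x,y)\<close>
  (outer variable \<open>x\<close>, inner variable \<open>y\<close>).\<close>
definition poly2 :: "complex poly poly \<Rightarrow> complex \<Rightarrow> complex \<Rightarrow> complex" where
  "poly2 P x y = poly (map_poly (\<lambda>q. poly q y) P) x"

definition hypergeometric2 :: "(int \<Rightarrow> int \<Rightarrow> complex) \<Rightarrow> bool" where
  "hypergeometric2 G \<longleftrightarrow>
     (\<exists>P Q. Q \<noteq> 0 \<and> (\<forall>n k. poly2 Q (of_int n) (of_int k) * G (n + 1) k
                                = poly2 P (of_int n) (of_int k) * G n k)) \<and>
     (\<exists>P Q. Q \<noteq> 0 \<and> (\<forall>n k. poly2 Q (of_int n) (of_int k) * G n (k + 1)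
                                = poly2 P (of_int n) (of_int k) * G n k))"

definition wz_pair :: "(int \<Rightarrow> int \<Rightarrow> complex) \<Rightarrow> (int \<Rightarrow> int \<Rightarrow> complex) \<Rightarrow> bool" where
  "wz_pair F G \<longleftrightarrow> (\<forall>n k. F (n + 1) k - F n k = G n (k + 1) - G n k)"

definition has_wz_mate :: "(int \<Rightarrow> int \<Rightarrow> complex) \<Rightarrow> bool" where
  "has_wz_mate F \<longleftrightarrow> (\<exists>G. hypergeometric2 G \<and> wz_pair F G)"

text \<open>The branch \<open>(-1)^x = exp(i \<pi> x)\<close>, so that \<open>(-1)^(x+1) = -(-1)^x\<close>.\<close>
definition neg1pow :: "complex \<Rightarrow> complex" where
  "neg1pow x = exp (\<i> * of_real pi * x)"

text \<open>The term \<open>F\<^sub>0(k,a,b,c,d)\<close>; reciprocal Gamma factors are written with the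
  entire function \<open>rGamma = 1/\<Gamma>\<close>.\<close>
definition F0 :: "complex \<Rightarrow> complex \<Rightarrow> complex \<Rightarrow> complex \<Rightarrow> complex \<Rightarrow> complex" where
  "F0 k a b c d = neg1pow (c + d) * Gamma (a + k) * Gamma (b + k) * rGamma (c + k) * rGamma (d + k)
     * Gamma (a + b - c - d + 2)
     * rGamma (a - c + 1) * rGamma (a - d + 1) * rGamma (b - c + 1) * rGamma (b - d + 1)"

end

theory Submission
  imports Defs
begin


lemma poly2_pCons: "poly2 (pCons q p) x y = poly q y + x * poly2 p x y"
  by (simp add: poly2_def map_poly_pCons)

lemma poly2_0[simp]: "poly2 0 x y = 0"
  by (simp add: poly2_def)

lemma poly2_add: "poly2 (p + q) x y = poly2 p x y + poly2 q x y"
proof (induction p arbitrary: q rule: pCons_induct)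
  case 0 then show ?case by simp
next
  case (pCons a p)
  obtain b q' where q: "q = pCons b q'" by (cases q)
  show ?case using pCons(2)[of q'] by (simp add: q poly2_pCons algebra_simps)
qed

lemma poly2_smult: "poly2 (smult a q) x y = poly a y * poly2 q x y"
  by (induction q rule: pCons_induct) (auto simp: poly2_pCons algebra_simps)

lemma poly2_mult: "poly2 (p * q) x y = poly2 p x y * poly2 q x y"
  by (induction p rule: pCons_induct) (auto simp: poly2_pCons poly2_add poly2_smult algebra_simps)

lemma poly2_const: "poly2 [:[:c:]:] x y = c"
  by (simp add: poly2_pCons)

lemma poly2_X: "poly2 [:0, 1:] x y = x"
  by (simp add: poly2_pCons)

lemma poly2_Y: "poly2 [:[:0, 1:]:] x y = y"
  by (simp add: poly2_pCons)

definition ip :: "(int \<Rightarrow> int \<Rightarrow> complex) \<Rightarrow> bool" where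
  "ip f \<longleftrightarrow> (\<exists>\<pi>. \<forall>n k. f n k = poly2 \<pi> (of_int n) (of_int k))"

lemma ip_const: "ip (\<lambda>n k. c)"
  unfolding ip_def by (rule exI[of _ "[:[:c:]:]"]) (simp add: poly2_const)

lemma ip_n: "ip (\<lambda>n k. of_int n)"
  unfolding ip_def by (rule exI[of _ "[:0,1:]"]) (simp add: poly2_X)

lemma ip_k: "ip (\<lambda>n k. of_int k)"
  unfolding ip_def by (rule exI[of _ "[:[:0,1:]:]"]) (simp add: poly2_Y)

lemma ip_add: "ip f \<Longrightarrow> ip g \<Longrightarrow> ip (\<lambda>n k. f n k + g n k)"
  unfolding ip_def by (metis poly2_add)

lemma ip_mult: "ip f \<Longrightarrow> ip g \<Longrightarrow> ip (\<lambda>n k. f n k * g n k)"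
  unfolding ip_def by (metis poly2_mult)

lemma ip_uminus: "ip f \<Longrightarrow> ip (\<lambda>n k. - f n k)"
  using ip_mult[OF ip_const[of "-1"]] by simp

lemma ip_diff: "ip f \<Longrightarrow> ip g \<Longrightarrow> ip (\<lambda>n k. f n k - g n k)"
  using ip_add[OF _ ip_uminus] by simp

lemma ip_sum: "finite S \<Longrightarrow> (\<And>i. i \<in> S \<Longrightarrow> ip (f i)) \<Longrightarrow> ip (\<lambda>n k. \<Sum>i\<in>S. f i n k)"
  by (induction S rule: finite_induct) (auto intro: ip_add ip_const)

lemma ip_poly: "ip h \<Longrightarrow> ip (\<lambda>n k. poly q (h n k))"
  by (induction q rule: pCons_induct) (auto intro!: ip_add ip_mult ip_const)

lemma ip_poly2: "ip g \<Longrightarrow> ip h \<Longrightarrow> ip (\<lambda>n k. poly2 \<pi> (g n k) (h n k))"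
proof (induction \<pi> rule: pCons_induct)
  case 0 then show ?case by (simp add: ip_const)
next
  case (pCons a p)
  then show ?case by (auto simp: poly2_pCons intro!: ip_add ip_mult ip_poly)
qed

lemma ip_shift_n: "ip f \<Longrightarrow> ip (\<lambda>n k. f (n+1) k)"
proof -
  assume "ip f"
  then obtain \<pi> where f: "\<And>n k. f n k = poly2 \<pi> (of_int n) (of_int k)" unfolding ip_def by blast
  have "ip (\<lambda>n k. poly2 \<pi> (of_int n + 1) (of_int k))"
    by (intro ip_poly2 ip_add ip_n ip_k ip_const)
  then show ?thesis by (simp add: f)
qed

lemma ip_shift_k: "ip f \<Longrightarrow> ip (\<lambda>n k. f n (k+1))"
proof -
  assume "ip f"
  then obtain \<pi> where f: "\<And>n k. f n k = poly2 \<pi> (of_int n) (of_int k)" unfolding ip_def by blast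
  have "ip (\<lambda>n k. poly2 \<pi> (of_int n) (of_int k + 1))"
    by (intro ip_poly2 ip_add ip_n ip_k ip_const)
  then show ?thesis by (simp add: f)
qed

lemma ip_pochhammer: "ip f \<Longrightarrow> ip (\<lambda>n k. pochhammer (f n k) d)"
  by (induction d) (auto simp: pochhammer_Suc intro!: ip_mult ip_add ip_const)

definition hypn :: "(int \<Rightarrow> int \<Rightarrow> complex) \<Rightarrow> bool" where
  "hypn G \<longleftrightarrow> (\<exists>P Q. Q \<noteq> 0 \<and> (\<forall>n k. poly2 Q (of_int n) (of_int k) * G (n + 1) k
                                = poly2 P (of_int n) (of_int k) * G n k))"
definition hypk :: "(int \<Rightarrow> int \<Rightarrow> complex) \<Rightarrow> bool" where
  "hypk G \<longleftrightarrow> (\<exists>P Q. Q \<noteq> 0 \<and> (\<forall>n k. poly2 Q (of_int n) (of_int k) * G n (k + 1)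
                                = poly2 P (of_int n) (of_int k) * G n k))"

lemma hyp2_iff: "hypergeometric2 G \<longleftrightarrow> hypn G \<and> hypk G"
  unfolding hypergeometric2_def hypn_def hypk_def by blast

lemma poly2_1[simp]: "poly2 1 x y = 1"
  by (simp add: poly2_def)

lemma ip_witness_nz: "(\<And>n k. f n k = poly2 \<pi> (of_int n) (of_int k)) \<Longrightarrow> f n0 k0 \<noteq> 0 \<Longrightarrow> \<pi> \<noteq> 0"
  by auto

lemma hypn_const_n: "(\<And>n k. G (n+1) k = G n k) \<Longrightarrow> hypn G"
  unfolding hypn_def by (rule exI[of _ 1], rule exI[of _ 1]) simp
lemma hypk_const_k: "(\<And>n k. G n (k+1) = G n k) \<Longrightarrow> hypk G"
  unfolding hypk_def by (rule exI[of _ 1], rule exI[of _ 1]) simp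

lemma hypn_mult: "hypn F \<Longrightarrow> hypn G \<Longrightarrow> hypn (\<lambda>n k. F n k * G n k)"
  unfolding hypn_def
proof (elim exE conjE)
  fix P1 Q1 P2 Q2
  assume "Q1 \<noteq> 0" "Q2 \<noteq> 0"
    and 1: "\<forall>n k. poly2 Q1 (of_int n) (of_int k) * F (n + 1) k = poly2 P1 (of_int n) (of_int k) * F n k"
    and 2: "\<forall>n k. poly2 Q2 (of_int n) (of_int k) * G (n + 1) k = poly2 P2 (of_int n) (of_int k) * G n k"
  show "\<exists>P Q. Q \<noteq> 0 \<and> (\<forall>n k. poly2 Q (of_int n) (of_int k) * (F (n + 1) k * G (n + 1) k) =
                 poly2 P (of_int n) (of_int k) * (F n k * G n k))"
  proof (intro exI conjI allI)
    show "Q1 * Q2 \<noteq> 0" using \<open>Q1 \<noteq> 0\<close> \<open>Q2 \<noteq> 0\<close> by simp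
    fix n k
    show "poly2 (Q1 * Q2) (of_int n) (of_int k) * (F (n + 1) k * G (n + 1) k) =
         poly2 (P1 * P2) (of_int n) (of_int k) * (F n k * G n k)"
      using 1[rule_format, of n k] 2[rule_format, of n k]
      by (simp add: poly2_mult) (metis (no_types, lifting) mult.assoc mult.left_commute)
  qed
qed

lemma hypk_mult: "hypk F \<Longrightarrow> hypk G \<Longrightarrow> hypk (\<lambda>n k. F n k * G n k)"
  unfolding hypk_def
proof (elim exE conjE)
  fix P1 Q1 P2 Q2
  assume "Q1 \<noteq> 0" "Q2 \<noteq> 0"
    and 1: "\<forall>n k. poly2 Q1 (of_int n) (of_int k) * F n (k+1) = poly2 P1 (of_int n) (of_int k) * F n k"
    and 2: "\<forall>n k. poly2 Q2 (of_int n) (of_int k) * G n (k+1) = poly2 P2 (of_int n) (of_int k) * G n k"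
  show "\<exists>P Q. Q \<noteq> 0 \<and> (\<forall>n k. poly2 Q (of_int n) (of_int k) * (F n (k+1) * G n (k+1)) =
                 poly2 P (of_int n) (of_int k) * (F n k * G n k))"
  proof (intro exI conjI allI)
    show "Q1 * Q2 \<noteq> 0" using \<open>Q1 \<noteq> 0\<close> \<open>Q2 \<noteq> 0\<close> by simp
    fix n k
    show "poly2 (Q1 * Q2) (of_int n) (of_int k) * (F n (k+1) * G n (k+1)) =
         poly2 (P1 * P2) (of_int n) (of_int k) * (F n k * G n k)"
      using 1[rule_format, of n k] 2[rule_format, of n k]
      by (simp add: poly2_mult) (metis (no_types, lifting) mult.assoc mult.left_commute)
  qed
qed

lemma hyp2_mult: "hypergeometric2 F \<Longrightarrow> hypergeometric2 G \<Longrightarrow> hypergeometric2 (\<lambda>n k. F n k * G n k)"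
  by (simp add: hyp2_iff hypn_mult hypk_mult)

lemma hyp2_const: "hypergeometric2 (\<lambda>n k. c)"
  by (simp add: hyp2_iff hypn_const_n hypk_const_k)

lemma hyp2_ip: "ip g \<Longrightarrow> hypergeometric2 g"
proof -
  assume "ip g"
  then obtain \<pi> where g: "\<And>n k. g n k = poly2 \<pi> (of_int n) (of_int k)" unfolding ip_def by blast
  show ?thesis
  proof (cases "\<pi> = 0")
    case True
    then have "g = (\<lambda>n k. 0)" using g by (auto simp: fun_eq_iff)
    then show ?thesis using hyp2_const by simp
  next
    case False
    obtain \<pi>1 where 1: "\<And>n k. g (n+1) k = poly2 \<pi>1 (of_int n) (of_int k)"
      using ip_shift_n[OF \<open>ip g\<close>] unfolding ip_def by blast
    obtain \<pi>2 where 2: "\<And>n k. g n (k+1) = poly2 \<pi>2 (of_int n) (of_int k)"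
      using ip_shift_k[OF \<open>ip g\<close>] unfolding ip_def by blast
    have "hypn g" unfolding hypn_def
      by (rule exI[of _ \<pi>1], rule exI[of _ \<pi>]) (metis False 1 g mult.commute)
    moreover have "hypk g" unfolding hypk_def
      by (rule exI[of _ \<pi>2], rule exI[of _ \<pi>]) (metis False 2 g mult.commute)
    ultimately show ?thesis by (simp add: hyp2_iff)
  qed
qed

lemma shift_rel_up:
  fixes h :: "complex \<Rightarrow> complex"
  assumes "p1 \<noteq> 0" "p2 \<noteq> 0" "\<And>w. w \<in> W \<Longrightarrow> poly p1 w * h (w + 1) = poly p2 w * h w"
    and "\<And>w i. w \<in> W \<Longrightarrow> w + of_int i \<in> W"
  shows "\<exists>Q P. Q \<noteq> 0 \<and> (\<forall>w\<in>W. poly Q w * h (w + of_nat N) = poly P w * h w)"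
proof (induction N)
  case 0
  show ?case by (rule exI[of _ 1], rule exI[of _ 1]) simp
next
  case (Suc N)
  then obtain Q P where Q: "Q \<noteq> 0" and QP: "\<forall>w\<in>W. poly Q w * h (w + of_nat N) = poly P w * h w" by blast
  show ?case
  proof (intro exI conjI ballI)
    show "Q * pcompose p1 [:of_nat N, 1:] \<noteq> 0" using Q assms(1) by (simp add: pcompose_eq_0_iff)
    fix w assume w: "w \<in> W"
    have wN: "w + of_nat N \<in> W" using assms(4)[OF w, of "int N"] by simp
    have "poly (Q * pcompose p1 [:of_nat N, 1:]) w * h (w + of_nat (Suc N))
        = poly Q w * (poly p1 (w + of_nat N) * h (w + of_nat N + 1))"
      by (simp add: poly_pcompose algebra_simps)
    also have "\<dots> = poly Q w * (poly p2 (w + of_nat N) * h (w + of_nat N))"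
      using assms(3)[OF wN] by simp
    also have "\<dots> = poly p2 (w + of_nat N) * (poly P w * h w)" using QP w by simp
    also have "\<dots> = poly (P * pcompose p2 [:of_nat N, 1:]) w * h w"
      by (simp add: poly_pcompose algebra_simps)
    finally show "poly (Q * pcompose p1 [:of_nat N, 1:]) w * h (w + of_nat (Suc N)) =
       poly (P * pcompose p2 [:of_nat N, 1:]) w * h w" .
  qed
qed

lemma shift_rel_down:
  fixes h :: "complex \<Rightarrow> complex"
  assumes "p1 \<noteq> 0" "p2 \<noteq> 0" "\<And>w. w \<in> W \<Longrightarrow> poly p1 w * h (w + 1) = poly p2 w * h w"
    and "\<And>w i. w \<in> W \<Longrightarrow> w + of_int i \<in> W"
  shows "\<exists>Q P. Q \<noteq> 0 \<and> (\<forall>w\<in>W. poly Q w * h (w - of_nat N) = poly P w * h w)"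
proof (induction N)
  case 0
  show ?case by (rule exI[of _ 1], rule exI[of _ 1]) simp
next
  case (Suc N)
  then obtain Q P where Q: "Q \<noteq> 0" and QP: "\<forall>w\<in>W. poly Q w * h (w - of_nat N) = poly P w * h w" by blast
  show ?case
  proof (intro exI conjI ballI)
    show "Q * pcompose p2 [:- of_nat N - 1, 1:] \<noteq> 0" using Q assms(2) by (simp add: pcompose_eq_0_iff)
    fix w assume w: "w \<in> W"
    have "w - of_nat N - 1 = w + of_int (- int N - 1)" by simp
    then have wN: "w - of_nat N - 1 \<in> W" using assms(4)[OF w, of "- int N - 1"] by metis
    have "poly (Q * pcompose p2 [:- of_nat N - 1, 1:]) w * h (w - of_nat (Suc N))
        = poly Q w * (poly p2 (w - of_nat N - 1) * h (w - of_nat N - 1))"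
      by (simp add: poly_pcompose algebra_simps)
    also have "\<dots> = poly Q w * (poly p1 (w - of_nat N - 1) * h (w - of_nat N - 1 + 1))"
      using assms(3)[OF wN] by simp
    also have "\<dots> = poly p1 (w - of_nat N - 1) * (poly P w * h w)" using QP w by simp
    also have "\<dots> = poly (P * pcompose p1 [:- of_nat N - 1, 1:]) w * h w"
      by (simp add: poly_pcompose algebra_simps)
    finally show "poly (Q * pcompose p2 [:- of_nat N - 1, 1:]) w * h (w - of_nat (Suc N)) =
       poly (P * pcompose p1 [:- of_nat N - 1, 1:]) w * h w" .
  qed
qed

lemma shift_rel:
  fixes h :: "complex \<Rightarrow> complex"
  assumes "p1 \<noteq> 0" "p2 \<noteq> 0" "\<And>w. w \<in> W \<Longrightarrow> poly p1 w * h (w + 1) = poly p2 w * h w"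
    and "\<And>w i. w \<in> W \<Longrightarrow> w + of_int i \<in> W"
  shows "\<exists>Q P. Q \<noteq> 0 \<and> (\<forall>w\<in>W. poly Q w * h (w + of_int j) = poly P w * h w)"
proof (cases "j \<ge> 0")
  case True
  then obtain N where "j = int N" by (metis nonneg_int_cases)
  then show ?thesis using shift_rel_up[OF assms, of N] by simp
next
  case False
  then obtain N where "j = - int N" by (metis nonpos_int_cases linear)
  then show ?thesis using shift_rel_down[OF assms, of N] by simp
qed

lemma ip_lin: "ip (\<lambda>n k. of_int (\<alpha> * n + \<beta> * k) + z)"
proof -
  have "ip (\<lambda>n k. of_int \<alpha> * of_int n + of_int \<beta> * of_int k + z)"
    by (intro ip_add ip_mult ip_const ip_n ip_k)
  then show ?thesis by simp
qed

lemma exists_nonroot: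
  fixes Q :: "complex poly"
  assumes "Q \<noteq> 0" "\<alpha> \<noteq> 0"
  shows "\<exists>n::int. poly Q (of_int \<alpha> * of_int n + z) \<noteq> 0"
proof (rule ccontr)
  assume "\<not> ?thesis"
  then have sub: "range (\<lambda>n::int. of_int \<alpha> * of_int n + z) \<subseteq> {x. poly Q x = 0}" by auto
  have "inj (\<lambda>n::int. of_int \<alpha> * of_int n + (z::complex))"
    using assms(2) by (auto simp: inj_def)
  then have "infinite (range (\<lambda>n::int. of_int \<alpha> * of_int n + z))"
    using finite_imageD infinite_UNIV_int by blast
  then show False using poly_roots_finite[OF assms(1)] sub finite_subset by blast
qed

lemma hyp_factor:
  fixes h :: "complex \<Rightarrow> complex"
  assumes "pp \<noteq> 0" "qq \<noteq> 0" "\<And>w. w \<in> W \<Longrightarrow> poly pp w * h (w + 1) = poly qq w * h w"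
    and "\<And>w i. w \<in> W \<Longrightarrow> w + of_int i \<in> W" and "z \<in> W"
  shows "hypergeometric2 (\<lambda>n k. h (of_int (\<alpha> * n + \<beta> * k) + z))"
proof -
  define L where "L n k = of_int (\<alpha> * n + \<beta> * k) + z" for n k
  have LW: "L n k \<in> W" for n k unfolding L_def using assms(4)[OF assms(5), of "\<alpha> * n + \<beta> * k"] by (simp add: add.commute)
  have "hypn (\<lambda>n k. h (L n k))"
  proof (cases "\<alpha> = 0")
    case True then show ?thesis by (intro hypn_const_n) (simp add: L_def)
  next
    case False
    obtain Q P where Q: "Q \<noteq> 0" and QP: "\<forall>w\<in>W. poly Q w * h (w + of_int \<alpha>) = poly P w * h w"
      using shift_rel[OF assms(1-4)] by blast
    obtain \<pi>q where \<pi>q: "\<And>n k. poly Q (L n k) = poly2 \<pi>q (of_int n) (of_int k)"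
      using ip_poly[OF ip_lin, of Q \<alpha> \<beta> z] unfolding ip_def L_def by blast
    obtain \<pi>p where \<pi>p: "\<And>n k. poly P (L n k) = poly2 \<pi>p (of_int n) (of_int k)"
      using ip_poly[OF ip_lin, of P \<alpha> \<beta> z] unfolding ip_def L_def by blast
    obtain n0 where "poly Q (of_int \<alpha> * of_int n0 + z) \<noteq> 0" using exists_nonroot[OF Q False] by blast
    then have "poly Q (L n0 0) \<noteq> 0" by (simp add: L_def)
    then have "\<pi>q \<noteq> 0" using \<pi>q by (metis poly2_0)
    moreover have "L (n+1) k = L n k + of_int \<alpha>" for n k by (simp add: L_def algebra_simps)
    ultimately show ?thesis unfolding hypn_def
      by (intro exI[of _ \<pi>p] exI[of _ \<pi>q]) (simp add: QP LW flip: \<pi>q \<pi>p)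
  qed
  moreover have "hypk (\<lambda>n k. h (L n k))"
  proof (cases "\<beta> = 0")
    case True then show ?thesis by (intro hypk_const_k) (simp add: L_def)
  next
    case False
    obtain Q P where Q: "Q \<noteq> 0" and QP: "\<forall>w\<in>W. poly Q w * h (w + of_int \<beta>) = poly P w * h w"
      using shift_rel[OF assms(1-4)] by blast
    obtain \<pi>q where \<pi>q: "\<And>n k. poly Q (L n k) = poly2 \<pi>q (of_int n) (of_int k)"
      using ip_poly[OF ip_lin, of Q \<alpha> \<beta> z] unfolding ip_def L_def by blast
    obtain \<pi>p where \<pi>p: "\<And>n k. poly P (L n k) = poly2 \<pi>p (of_int n) (of_int k)"
      using ip_poly[OF ip_lin, of P \<alpha> \<beta> z] unfolding ip_def L_def by blast
    obtain k0 where "poly Q (of_int \<beta> * of_int k0 + z) \<noteq> 0" using exists_nonroot[OF Q False] by blast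
    then have "poly Q (L 0 k0) \<noteq> 0" by (simp add: L_def)
    then have "\<pi>q \<noteq> 0" using \<pi>q by (metis poly2_0)
    moreover have "L n (k+1) = L n k + of_int \<beta>" for n k by (simp add: L_def algebra_simps)
    ultimately show ?thesis unfolding hypk_def
      by (intro exI[of _ \<pi>p] exI[of _ \<pi>q]) (simp add: QP LW flip: \<pi>q \<pi>p)
  qed
  ultimately show ?thesis unfolding L_def by (simp add: hyp2_iff)
qed

definition mult_of :: "(int \<Rightarrow> int \<Rightarrow> complex) \<Rightarrow> (int \<Rightarrow> int \<Rightarrow> complex) \<Rightarrow> bool" where
  "mult_of f T \<longleftrightarrow> (\<exists>g. ip g \<and> (\<forall>n k. f n k = g n k * T n k))"

lemma mult_of_hyp: "mult_of f T \<Longrightarrow> hypergeometric2 T \<Longrightarrow> hypergeometric2 f"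
proof -
  assume "mult_of f T" "hypergeometric2 T"
  then obtain g where "ip g" and f: "\<And>n k. f n k = g n k * T n k" unfolding mult_of_def by blast
  have "hypergeometric2 (\<lambda>n k. g n k * T n k)"
    by (rule hyp2_mult[OF hyp2_ip[OF \<open>ip g\<close>] \<open>hypergeometric2 T\<close>])
  moreover have "f = (\<lambda>n k. g n k * T n k)" using f by (auto simp: fun_eq_iff)
  ultimately show ?thesis by simp
qed

lemma mult_of_refl: "mult_of T T"
  unfolding mult_of_def by (rule exI[of _ "\<lambda>n k. 1"]) (simp add: ip_const)

lemma mult_of_0: "mult_of (\<lambda>n k. 0) T"
  unfolding mult_of_def by (rule exI[of _ "\<lambda>n k. 0"]) (simp add: ip_const)

lemma mult_of_add: "mult_of f T \<Longrightarrow> mult_of g T \<Longrightarrow> mult_of (\<lambda>n k. f n k + g n k) T"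
  unfolding mult_of_def
proof (elim exE conjE)
  fix g1 g2 assume "ip g1" "ip g2" "\<forall>n k. f n k = g1 n k * T n k" "\<forall>n k. g n k = g2 n k * T n k"
  then show "\<exists>h. ip h \<and> (\<forall>n k. f n k + g n k = h n k * T n k)"
    by (intro exI[of _ "\<lambda>n k. g1 n k + g2 n k"]) (auto intro: ip_add simp: algebra_simps)
qed

lemma mult_of_uminus: "mult_of f T \<Longrightarrow> mult_of (\<lambda>n k. - f n k) T"
  unfolding mult_of_def
proof (elim exE conjE)
  fix g1 assume "ip g1" "\<forall>n k. f n k = g1 n k * T n k"
  then show "\<exists>h. ip h \<and> (\<forall>n k. - f n k = h n k * T n k)"
    by (intro exI[of _ "\<lambda>n k. - g1 n k"]) (auto intro: ip_uminus)
qed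

lemma mult_of_sum: "finite S \<Longrightarrow> (\<And>i. i \<in> S \<Longrightarrow> mult_of (f i) T) \<Longrightarrow> mult_of (\<lambda>n k. \<Sum>i\<in>S. f i n k) T"
  by (induction S rule: finite_induct) (auto intro: mult_of_add mult_of_0)

lemma mult_of_mult: "mult_of f1 T1 \<Longrightarrow> mult_of f2 T2 \<Longrightarrow> mult_of (\<lambda>n k. f1 n k * f2 n k) (\<lambda>n k. T1 n k * T2 n k)"
  unfolding mult_of_def
proof (elim exE conjE)
  fix g1 g2 assume "ip g1" "ip g2" "\<forall>n k. f1 n k = g1 n k * T1 n k" "\<forall>n k. f2 n k = g2 n k * T2 n k"
  then show "\<exists>h. ip h \<and> (\<forall>n k. f1 n k * f2 n k = h n k * (T1 n k * T2 n k))"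
    by (intro exI[of _ "\<lambda>n k. g1 n k * g2 n k"]) (auto intro: ip_mult simp: algebra_simps)
qed

lemma mult_of_Gamma:
  assumes "ip v" "jb \<le> jj" "\<And>n k. v n k + of_int jb \<notin> \<int>\<^sub>\<le>\<^sub>0"
  shows "mult_of (\<lambda>n k. Gamma (v n k + of_int jj)) (\<lambda>n k. Gamma (v n k + of_int jb))"
  unfolding mult_of_def
proof (intro exI conjI allI)
  define d where "d = nat (jj - jb)"
  have jj: "of_int jj = (of_int jb + of_nat d :: complex)" using assms(2) unfolding d_def by simp
  show "ip (\<lambda>n k. pochhammer (v n k + of_int jb) d)"
    by (intro ip_pochhammer ip_add assms(1) ip_const)
  fix n k
  have "Gamma (v n k + of_int jb) \<noteq> 0" using assms(3) by (simp add: Gamma_eq_zero_iff)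
  then show "Gamma (v n k + of_int jj) = pochhammer (v n k + of_int jb) d * Gamma (v n k + of_int jb)"
    using pochhammer_Gamma[OF assms(3)[of n k], of d] by (simp add: jj add.assoc)
qed

lemma mult_of_rGamma:
  assumes "ip v" "jj \<le> jb"
  shows "mult_of (\<lambda>n k. rGamma (v n k + of_int jj)) (\<lambda>n k. rGamma (v n k + of_int jb))"
  unfolding mult_of_def
proof (intro exI conjI allI)
  define d where "d = nat (jb - jj)"
  have jj: "of_int jb = (of_int jj + of_nat d :: complex)" using assms(2) unfolding d_def by simp
  show "ip (\<lambda>n k. pochhammer (v n k + of_int jj) d)"
    by (intro ip_pochhammer ip_add assms(1) ip_const)
  fix n k
  show "rGamma (v n k + of_int jj) = pochhammer (v n k + of_int jj) d * rGamma (v n k + of_int jb)"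
    using pochhammer_rGamma[of "v n k + of_int jj" d] by (simp add: jj add.assoc)
qed

lemma neg1pow_add: "neg1pow (w + z) = neg1pow z * neg1pow w"
  by (simp add: neg1pow_def algebra_simps exp_add)

lemma neg1pow_plus1: "neg1pow (w + 1) = - neg1pow w"
  by (simp add: neg1pow_add) (simp add: neg1pow_def)

lemma mult_of_neg1pow:
  shows "mult_of (\<lambda>n k. neg1pow (v n k + of_int jj)) (\<lambda>n k. neg1pow (v n k))"
  unfolding mult_of_def
  by (rule exI[of _ "\<lambda>n k. neg1pow (of_int jj)"]) (simp add: ip_const neg1pow_add)

lemma mult_of_cmult: "mult_of f T \<Longrightarrow> mult_of (\<lambda>n k. c * f n k) T"
  unfolding mult_of_def
proof (elim exE conjE)
  fix g1 assume "ip g1" "\<forall>n k. f n k = g1 n k * T n k"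
  then show "\<exists>h. ip h \<and> (\<forall>n k. c * f n k = h n k * T n k)"
    by (intro exI[of _ "\<lambda>n k. c * g1 n k"]) (auto intro: ip_mult ip_const)
qed




definition Ga :: "complex \<Rightarrow> complex \<Rightarrow> complex \<Rightarrow> complex \<Rightarrow> complex \<Rightarrow> complex" where
  "Ga x y1 y2 y3 y4 = neg1pow (y3 + y4) * Gamma (y1 + x) * Gamma (y2 + x) * rGamma (y3 + x - 1) * rGamma (y4 + x - 1)
     * Gamma (y1 + y2 - y3 - y4 + 2)
     * rGamma (y1 - y3 + 2) * rGamma (y1 - y4 + 2) * rGamma (y2 - y3 + 1) * rGamma (y2 - y4 + 1)"

definition Gc :: "complex \<Rightarrow> complex \<Rightarrow> complex \<Rightarrow> complex \<Rightarrow> complex \<Rightarrow> complex" where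
  "Gc x y1 y2 y3 y4 = - neg1pow (y3 + y4) * Gamma (y1 + x) * Gamma (y2 + x) * rGamma (y3 + x) * rGamma (y4 + x - 1)
     * Gamma (y1 + y2 - y3 - y4 + 1)
     * rGamma (y1 - y3 + 1) * rGamma (y1 - y4 + 1) * rGamma (y2 - y3 + 1) * rGamma (y2 - y4 + 1)"

lemma Gamma_p1: "z \<notin> \<int>\<^sub>\<le>\<^sub>0 \<Longrightarrow> w = z + 1 \<Longrightarrow> Gamma w = z * Gamma z"
  using Gamma_plus1 by simp

lemma rGamma_p1: "w = z + 1 \<Longrightarrow> rGamma z = z * rGamma w"
  using rGamma_plus1[of z] by simp

lemma step_a:
  assumes "y1 + x \<notin> \<int>\<^sub>\<le>\<^sub>0" "y2 + x \<notin> \<int>\<^sub>\<le>\<^sub>0" "y1 + y2 - y3 - y4 + 2 \<notin> \<int>\<^sub>\<le>\<^sub>0"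
  shows "F0 x (y1 + 1) y2 y3 y4 - F0 x y1 y2 y3 y4 = Ga (x + 1) y1 y2 y3 y4 - Ga x y1 y2 y3 y4"
proof -
  have e1: "Gamma (y1 + 1 + x) = (y1 + x) * Gamma (y1 + x)" by (rule Gamma_p1[OF assms(1)]) simp
  have e1': "Gamma (y1 + (x + 1)) = (y1 + x) * Gamma (y1 + x)" by (rule Gamma_p1[OF assms(1)]) simp
  have e2': "Gamma (y2 + (x + 1)) = (y2 + x) * Gamma (y2 + x)" by (rule Gamma_p1[OF assms(2)]) simp
  have e3: "Gamma (y1 + 1 + y2 - y3 - y4 + 2) = (y1 + y2 - y3 - y4 + 2) * Gamma (y1 + y2 - y3 - y4 + 2)"
    by (rule Gamma_p1[OF assms(3)]) simp
  have r3: "rGamma (y3 + x) = (y3 + x) * rGamma (y3 + x + 1)" by (rule rGamma_p1) simp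
  have r3': "rGamma (y3 + (x + 1) - 1) = (y3 + x) * rGamma (y3 + x + 1)" using rGamma_plus1[of "y3 + x"] by (simp add: algebra_simps)
  have r3'': "rGamma (y3 + x - 1) = (y3 + x - 1) * ((y3 + x) * rGamma (y3 + x + 1))"
    by (subst r3[symmetric]) (rule rGamma_p1, simp)
  have r4: "rGamma (y4 + x) = (y4 + x) * rGamma (y4 + x + 1)" by (rule rGamma_p1) simp
  have r4': "rGamma (y4 + (x + 1) - 1) = (y4 + x) * rGamma (y4 + x + 1)" using rGamma_plus1[of "y4 + x"] by (simp add: algebra_simps)
  have r4'': "rGamma (y4 + x - 1) = (y4 + x - 1) * ((y4 + x) * rGamma (y4 + x + 1))"
    by (subst r4[symmetric]) (rule rGamma_p1, simp)
  have r13: "rGamma (y1 - y3 + 1) = (y1 - y3 + 1) * rGamma (y1 - y3 + 2)" by (rule rGamma_p1) simp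
  have r13': "rGamma (y1 + 1 - y3 + 1) = rGamma (y1 - y3 + 2)" by (simp add: algebra_simps)
  have r14: "rGamma (y1 - y4 + 1) = (y1 - y4 + 1) * rGamma (y1 - y4 + 2)" by (rule rGamma_p1) simp
  have r14': "rGamma (y1 + 1 - y4 + 1) = rGamma (y1 - y4 + 2)" by (simp add: algebra_simps)
  define Cm where "Cm = neg1pow (y3 + y4) * Gamma (y1 + x) * Gamma (y2 + x) * ((y3 + x) * rGamma (y3 + x + 1))
     * ((y4 + x) * rGamma (y4 + x + 1)) * Gamma (y1 + y2 - y3 - y4 + 2)
     * rGamma (y1 - y3 + 2) * rGamma (y1 - y4 + 2) * rGamma (y2 - y3 + 1) * rGamma (y2 - y4 + 1)"
  have 1: "F0 x (y1 + 1) y2 y3 y4 = Cm * ((y1 + x) * (y1 + y2 - y3 - y4 + 2))"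
    unfolding F0_def Cm_def e1 e3 r3 r4 r13' r14' by (simp only: mult_ac)
  have 2: "F0 x y1 y2 y3 y4 = Cm * ((y1 - y3 + 1) * (y1 - y4 + 1))"
    unfolding F0_def Cm_def r3 r4 r13 r14 by (simp only: mult_ac)
  have 3: "Ga (x + 1) y1 y2 y3 y4 = Cm * ((y1 + x) * (y2 + x))"
    unfolding Ga_def Cm_def e1' e2' r3' r4' by (simp only: mult_ac)
  have 4: "Ga x y1 y2 y3 y4 = Cm * ((y3 + x - 1) * (y4 + x - 1))"
    unfolding Ga_def Cm_def r3'' r4'' by (simp only: mult_ac)
  have p: "(y1 + x) * (y1 + y2 - y3 - y4 + 2) - (y1 - y3 + 1) * (y1 - y4 + 1) = (y1 + x) * (y2 + x) - (y3 + x - 1) * (y4 + x - 1)"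
    by (simp add: algebra_simps)
  show ?thesis unfolding 1 2 3 4 using arg_cong[OF p, of "\<lambda>t. Cm * t"] by (simp add: algebra_simps)
qed

lemma step_c:
  assumes "y1 + x \<notin> \<int>\<^sub>\<le>\<^sub>0" "y2 + x \<notin> \<int>\<^sub>\<le>\<^sub>0" "y1 + y2 - y3 - y4 + 1 \<notin> \<int>\<^sub>\<le>\<^sub>0"
  shows "F0 x y1 y2 (y3 + 1) y4 - F0 x y1 y2 y3 y4 = Gc (x + 1) y1 y2 y3 y4 - Gc x y1 y2 y3 y4"
proof -
  have e1': "Gamma (y1 + (x + 1)) = (y1 + x) * Gamma (y1 + x)" by (rule Gamma_p1[OF assms(1)]) simp
  have e2': "Gamma (y2 + (x + 1)) = (y2 + x) * Gamma (y2 + x)" by (rule Gamma_p1[OF assms(2)]) simp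
  have e3: "Gamma (y1 + y2 - y3 - y4 + 2) = (y1 + y2 - y3 - y4 + 1) * Gamma (y1 + y2 - y3 - y4 + 1)"
    by (rule Gamma_p1[OF assms(3)]) simp
  have e3': "Gamma (y1 + y2 - (y3 + 1) - y4 + 2) = Gamma (y1 + y2 - y3 - y4 + 1)"
    by (simp add: algebra_simps)
  have s: "neg1pow (y3 + 1 + y4) = - neg1pow (y3 + y4)"
    using neg1pow_plus1[of "y3 + y4"] by (simp add: algebra_simps)
  have r3: "rGamma (y3 + x) = (y3 + x) * rGamma (y3 + x + 1)" by (rule rGamma_p1) simp
  have r3': "rGamma (y3 + (x + 1)) = rGamma (y3 + x + 1)" by (simp add: algebra_simps)
  have r3'': "rGamma (y3 + 1 + x) = rGamma (y3 + x + 1)" by (simp add: algebra_simps)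
  have r4: "rGamma (y4 + x) = (y4 + x) * rGamma (y4 + x + 1)" by (rule rGamma_p1) simp
  have r4': "rGamma (y4 + (x + 1) - 1) = (y4 + x) * rGamma (y4 + x + 1)" using rGamma_plus1[of "y4 + x"] by (simp add: algebra_simps)
  have r4'': "rGamma (y4 + x - 1) = (y4 + x - 1) * ((y4 + x) * rGamma (y4 + x + 1))"
    by (subst r4[symmetric]) (rule rGamma_p1, simp)
  have r13: "rGamma (y1 - (y3 + 1) + 1) = (y1 - y3) * rGamma (y1 - y3 + 1)" using rGamma_plus1[of "y1 - y3"] by (simp add: algebra_simps)
  have r23: "rGamma (y2 - (y3 + 1) + 1) = (y2 - y3) * rGamma (y2 - y3 + 1)" using rGamma_plus1[of "y2 - y3"] by (simp add: algebra_simps)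
  define Cm where "Cm = neg1pow (y3 + y4) * Gamma (y1 + x) * Gamma (y2 + x) * rGamma (y3 + x + 1)
     * ((y4 + x) * rGamma (y4 + x + 1)) * Gamma (y1 + y2 - y3 - y4 + 1)
     * rGamma (y1 - y3 + 1) * rGamma (y1 - y4 + 1) * rGamma (y2 - y3 + 1) * rGamma (y2 - y4 + 1)"
  have 1: "F0 x y1 y2 (y3 + 1) y4 = Cm * (- (y1 - y3) * (y2 - y3))"
    unfolding F0_def Cm_def e3' s r3'' r4 r13 r23 by (simp only: mult_ac mult_minus_left mult_minus_right)
  have 2: "F0 x y1 y2 y3 y4 = Cm * ((y3 + x) * (y1 + y2 - y3 - y4 + 1))"
    unfolding F0_def Cm_def r3 r4 e3 by (simp only: mult_ac)
  have 3: "Gc (x + 1) y1 y2 y3 y4 = Cm * (- (y1 + x) * (y2 + x))"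
    unfolding Gc_def Cm_def e1' e2' r3' r4' by (simp only: mult_ac mult_minus_left mult_minus_right)
  have 4: "Gc x y1 y2 y3 y4 = Cm * (- (y4 + x - 1) * (y3 + x))"
    unfolding Gc_def Cm_def r3 r4'' by (simp only: mult_ac mult_minus_left mult_minus_right)
  have p: "- (y1 - y3) * (y2 - y3) - (y3 + x) * (y1 + y2 - y3 - y4 + 1) = - (y1 + x) * (y2 + x) - - (y4 + x - 1) * (y3 + x)"
    by (simp add: algebra_simps)
  show ?thesis unfolding 1 2 3 4 using arg_cong[OF p, of "\<lambda>t. Cm * t"] by (simp add: algebra_simps)
qed


lemma F0_sym12: "F0 x y2 y1 y3 y4 = F0 x y1 y2 y3 y4"
  unfolding F0_def by (simp add: algebra_simps)
lemma F0_sym34: "F0 x y1 y2 y4 y3 = F0 x y1 y2 y3 y4"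
  unfolding F0_def by (simp add: algebra_simps)

definition Gb :: "complex \<Rightarrow> complex \<Rightarrow> complex \<Rightarrow> complex \<Rightarrow> complex \<Rightarrow> complex" where
  "Gb x y1 y2 y3 y4 = Ga x y2 y1 y3 y4"
definition Gd :: "complex \<Rightarrow> complex \<Rightarrow> complex \<Rightarrow> complex \<Rightarrow> complex \<Rightarrow> complex" where
  "Gd x y1 y2 y3 y4 = Gc x y1 y2 y4 y3"

definition Hs :: "int \<Rightarrow> (int \<Rightarrow> complex) \<Rightarrow> complex" where
  "Hs j \<psi> = (if 0 \<le> j then (\<Sum>i\<in>{0..<j}. \<psi> i) else - (\<Sum>i\<in>{j..<0}. \<psi> i))"

lemma Hs_diff: "Hs j (\<lambda>i. f i - g i) = Hs j f - Hs j g"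
  unfolding Hs_def by (simp add: sum_subtractf)

lemma tele:
  assumes "\<And>i. min 0 j \<le> i \<Longrightarrow> i < max 0 j \<Longrightarrow> \<phi> (i + 1) - \<phi> i = \<psi> i"
  shows "\<phi> j - \<phi> 0 = Hs j \<psi>"
proof (cases "0 \<le> j")
  case True
  then obtain N where j: "j = int N" by (metis nonneg_int_cases)
  have "N' \<le> N \<Longrightarrow> \<phi> (int N') - \<phi> 0 = (\<Sum>i\<in>{0..<int N'}. \<psi> i)" for N'
  proof (induction N')
    case 0 then show ?case by simp
  next
    case (Suc N')
    have set: "{0..<1 + int N'} = insert (int N') {0..<int N'}" by auto
    have "\<phi> (int N' + 1) - \<phi> (int N') = \<psi> (int N')" using Suc(2) j by (intro assms) auto
    then show ?case using Suc by (simp add: set algebra_simps)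
  qed
  then show ?thesis using True j by (simp add: Hs_def)
next
  case False
  then obtain N where j: "j = - int N" by (metis nonpos_int_cases linear)
  have "N' \<le> N \<Longrightarrow> \<phi> (- int N') - \<phi> 0 = - (\<Sum>i\<in>{- int N'..<0}. \<psi> i)" for N'
  proof (induction N')
    case 0 then show ?case by simp
  next
    case (Suc N')
    have set: "{- 1 - int N'..<0} = insert (- 1 - int N') {- int N'..<0}" by auto
    have "\<phi> (- 1 - int N' + 1) - \<phi> (- 1 - int N') = \<psi> (- 1 - int N')" using Suc(2) j False by (intro assms) auto
    then show ?case using Suc by (simp add: set algebra_simps)
  qed
  then show ?thesis using False j by (simp add: Hs_def)
qed

lemma notInts_shift: "z \<notin> \<int> \<Longrightarrow> z + of_int i \<notin> \<int>\<^sub>\<le>\<^sub>0"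
  by (metis Ints_diff Ints_of_int add_diff_cancel_right' nonpos_Ints_Int)

lemma move_a:
  assumes "y1 + x \<notin> \<int>" "y2 + x \<notin> \<int>"
    and "\<And>i. min 0 j \<le> i \<Longrightarrow> i \<le> max 0 j \<Longrightarrow> y1 + y2 - y3 - y4 + 2 + of_int i \<notin> \<int>\<^sub>\<le>\<^sub>0"
  shows "F0 x (y1 + of_int j) y2 y3 y4 - F0 x y1 y2 y3 y4
     = Hs j (\<lambda>i. Ga (x + 1) (y1 + of_int i) y2 y3 y4) - Hs j (\<lambda>i. Ga x (y1 + of_int i) y2 y3 y4)"
proof -
  have "F0 x (y1 + of_int j) y2 y3 y4 - F0 x (y1 + of_int 0) y2 y3 y4
     = Hs j (\<lambda>i. Ga (x + 1) (y1 + of_int i) y2 y3 y4 - Ga x (y1 + of_int i) y2 y3 y4)"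
  proof (rule tele)
    fix i assume i: "min 0 j \<le> i" "i < max 0 j"
    have c1: "y1 + of_int i + x \<notin> \<int>\<^sub>\<le>\<^sub>0" using notInts_shift[OF assms(1), of i] by (simp add: algebra_simps)
    have c2: "y2 + x \<notin> \<int>\<^sub>\<le>\<^sub>0" using notInts_shift[OF assms(2), of 0] by simp
    have c3: "y1 + of_int i + y2 - y3 - y4 + 2 \<notin> \<int>\<^sub>\<le>\<^sub>0" using assms(3)[of i] i by (simp add: algebra_simps)
    show "F0 x (y1 + of_int (i + 1)) y2 y3 y4 - F0 x (y1 + of_int i) y2 y3 y4 =
          Ga (x + 1) (y1 + of_int i) y2 y3 y4 - Ga x (y1 + of_int i) y2 y3 y4"
      using step_a[OF c1 c2 c3] by (simp add: add.assoc)
  qed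
  then show ?thesis by (simp add: Hs_diff)
qed

lemma move_b:
  assumes "y1 + x \<notin> \<int>" "y2 + x \<notin> \<int>"
    and "\<And>i. min 0 j \<le> i \<Longrightarrow> i \<le> max 0 j \<Longrightarrow> y1 + y2 - y3 - y4 + 2 + of_int i \<notin> \<int>\<^sub>\<le>\<^sub>0"
  shows "F0 x y1 (y2 + of_int j) y3 y4 - F0 x y1 y2 y3 y4
     = Hs j (\<lambda>i. Gb (x + 1) y1 (y2 + of_int i) y3 y4) - Hs j (\<lambda>i. Gb x y1 (y2 + of_int i) y3 y4)"
proof -
  have "\<And>i. min 0 j \<le> i \<Longrightarrow> i \<le> max 0 j \<Longrightarrow> y2 + y1 - y3 - y4 + 2 + of_int i \<notin> \<int>\<^sub>\<le>\<^sub>0"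
    using assms(3) by (simp add: add.commute)
  from move_a[OF assms(2) assms(1) this] show ?thesis
    unfolding Gb_def by (simp add: F0_sym12)
qed

lemma move_c:
  assumes "y1 + x \<notin> \<int>" "y2 + x \<notin> \<int>"
    and "\<And>i. min 0 j \<le> i \<Longrightarrow> i \<le> max 0 j \<Longrightarrow> y1 + y2 - y3 - y4 + 2 - of_int i \<notin> \<int>\<^sub>\<le>\<^sub>0"
  shows "F0 x y1 y2 (y3 + of_int j) y4 - F0 x y1 y2 y3 y4
     = Hs j (\<lambda>i. Gc (x + 1) y1 y2 (y3 + of_int i) y4) - Hs j (\<lambda>i. Gc x y1 y2 (y3 + of_int i) y4)"
proof -
  have "F0 x y1 y2 (y3 + of_int j) y4 - F0 x y1 y2 (y3 + of_int 0) y4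
     = Hs j (\<lambda>i. Gc (x + 1) y1 y2 (y3 + of_int i) y4 - Gc x y1 y2 (y3 + of_int i) y4)"
  proof (rule tele)
    fix i assume i: "min 0 j \<le> i" "i < max 0 j"
    have c1: "y1 + x \<notin> \<int>\<^sub>\<le>\<^sub>0" using notInts_shift[OF assms(1), of 0] by simp
    have c2: "y2 + x \<notin> \<int>\<^sub>\<le>\<^sub>0" using notInts_shift[OF assms(2), of 0] by simp
    have c3: "y1 + y2 - (y3 + of_int i) - y4 + 1 \<notin> \<int>\<^sub>\<le>\<^sub>0" using assms(3)[of "i + 1"] i by (simp add: algebra_simps)
    show "F0 x y1 y2 (y3 + of_int (i + 1)) y4 - F0 x y1 y2 (y3 + of_int i) y4 =
          Gc (x + 1) y1 y2 (y3 + of_int i) y4 - Gc x y1 y2 (y3 + of_int i) y4"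
      using step_c[OF c1 c2 c3] by (simp add: add.assoc)
  qed
  then show ?thesis by (simp add: Hs_diff)
qed

lemma move_d:
  assumes "y1 + x \<notin> \<int>" "y2 + x \<notin> \<int>"
    and "\<And>i. min 0 j \<le> i \<Longrightarrow> i \<le> max 0 j \<Longrightarrow> y1 + y2 - y3 - y4 + 2 - of_int i \<notin> \<int>\<^sub>\<le>\<^sub>0"
  shows "F0 x y1 y2 y3 (y4 + of_int j) - F0 x y1 y2 y3 y4
     = Hs j (\<lambda>i. Gd (x + 1) y1 y2 y3 (y4 + of_int i)) - Hs j (\<lambda>i. Gd x y1 y2 y3 (y4 + of_int i))"
proof -
  have "\<And>i. min 0 j \<le> i \<Longrightarrow> i \<le> max 0 j \<Longrightarrow> y1 + y2 - y4 - y3 + 2 - of_int i \<notin> \<int>\<^sub>\<le>\<^sub>0"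
    using assms(3) by (simp add: algebra_simps)
  from move_c[OF assms(1) assms(2) this] show ?thesis
    unfolding Gd_def by (simp add: F0_sym34)
qed

lemma move_k:
  shows "F0 (x + of_int j) y1 y2 y3 y4 - F0 x y1 y2 y3 y4
     = Hs j (\<lambda>i. F0 (x + 1 + of_int i) y1 y2 y3 y4) - Hs j (\<lambda>i. F0 (x + of_int i) y1 y2 y3 y4)"
proof -
  have "F0 (x + of_int j) y1 y2 y3 y4 - F0 (x + of_int 0) y1 y2 y3 y4
     = Hs j (\<lambda>i. F0 (x + 1 + of_int i) y1 y2 y3 y4 - F0 (x + of_int i) y1 y2 y3 y4)"
    by (rule tele) (simp add: algebra_simps)
  then show ?thesis by (simp add: Hs_diff)
qed




lemma hyp_neg1pow: "hypergeometric2 (\<lambda>n k. neg1pow (of_int (\<alpha> * n + \<beta> * k) + z))"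
  by (rule hyp_factor[where pp=1 and qq="-1" and W=UNIV]) (auto simp: neg1pow_plus1)

lemma hyp_rGamma: "hypergeometric2 (\<lambda>n k. rGamma (of_int (\<alpha> * n + \<beta> * k) + z))"
  by (rule hyp_factor[where pp="[:0,1:]" and qq=1 and W=UNIV]) (auto simp: rGamma_plus1)

lemma hyp_Gamma: "z \<notin> \<int> \<Longrightarrow> hypergeometric2 (\<lambda>n k. Gamma (of_int (\<alpha> * n + \<beta> * k) + z))"
proof (rule hyp_factor[where pp=1 and qq="[:0,1:]" and W="{w. w \<notin> \<int>}"])
  fix w :: complex assume "w \<in> {w. w \<notin> \<int>}"
  then show "poly 1 w * Gamma (w + 1) = poly [:0, 1:] w * Gamma w"
    by (simp add: Gamma_plus1 not_in_Ints_imp_not_in_nonpos_Ints)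
next
  fix w :: complex and i :: int assume "w \<in> {w. w \<notin> \<int>}"
  then show "w + of_int i \<in> {w. w \<notin> \<int>}"
    by (auto dest: Ints_diff[of _ "of_int i"])
qed auto

lemma hyp2_cong: "hypergeometric2 g \<Longrightarrow> (\<And>n k. f n k = g n k) \<Longrightarrow> hypergeometric2 f"
proof -
  assume "hypergeometric2 g" "\<And>n k. f n k = g n k"
  then have "f = g" by (auto simp: fun_eq_iff)
  then show ?thesis using \<open>hypergeometric2 g\<close> by simp
qed

lemma nonpos_shift: "z \<notin> \<int>\<^sub>\<le>\<^sub>0 \<Longrightarrow> 0 \<le> j \<Longrightarrow> z + of_int j \<notin> \<int>\<^sub>\<le>\<^sub>0"
proof
  assume z: "z \<notin> \<int>\<^sub>\<le>\<^sub>0" and j: "0 \<le> j" and "z + of_int j \<in> \<int>\<^sub>\<le>\<^sub>0"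
  then obtain t where t: "t \<le> 0" "z + of_int j = of_int t" by (auto elim!: nonpos_Ints_cases)
  then have "z = of_int (t - j)" by (simp add: algebra_simps)
  moreover have "t - j \<le> 0" using t j by simp
  ultimately show False using z nonpos_Ints_of_int by blast
qed

lemma mult_of_neg1pow':
  shows "mult_of (\<lambda>n k. neg1pow (v n k + of_int j)) (\<lambda>n k. neg1pow (v n k + of_int j0))"
  unfolding mult_of_def
proof (intro exI conjI allI)
  show "ip (\<lambda>n k. neg1pow (of_int (j - j0)))" by (rule ip_const)
  fix n k
  have "v n k + of_int j = (v n k + of_int j0) + of_int (j - j0)" by simp
  then show "neg1pow (v n k + of_int j) = neg1pow (of_int (j - j0)) * neg1pow (v n k + of_int j0)"
    by (simp only: neg1pow_add)
qed

lemma mult_of_cong: "mult_of g T \<Longrightarrow> (\<And>n k. f n k = g n k) \<Longrightarrow> mult_of f T"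
proof -
  assume "mult_of g T" "\<And>n k. f n k = g n k"
  then have "f = g" by (auto simp: fun_eq_iff)
  then show ?thesis using \<open>mult_of g T\<close> by simp
qed

lemma mult_of_Hs:
  assumes "\<And>i. min 0 j \<le> i \<Longrightarrow> i < max 0 j \<Longrightarrow> mult_of (f i) T"
  shows "mult_of (\<lambda>n k. Hs j (\<lambda>i. f i n k)) T"
proof (cases "0 \<le> j")
  case True
  have "mult_of (\<lambda>n k. \<Sum>i\<in>{0..<j}. f i n k) T"
    by (rule mult_of_sum) (use assms True in auto)
  then show ?thesis using True by (simp add: Hs_def)
next
  case False
  have "mult_of (\<lambda>n k. - (\<Sum>i\<in>{j..<0}. f i n k)) T"
    by (rule mult_of_uminus, rule mult_of_sum) (use assms False in auto)
  then show ?thesis using False by (simp add: Hs_def)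
qed

locale wzl =
  fixes K A B C D :: int and k0 a b c d :: complex
  assumes hyp: "\<forall>n k :: int.
      of_int (K * n + k) + k0 + of_int (A * n) + a \<notin> \<int>\<^sub>\<le>\<^sub>0 \<and>
      of_int (K * n + k) + k0 + of_int (B * n) + b \<notin> \<int>\<^sub>\<le>\<^sub>0 \<and>
      (of_int (A * n) + a) + (of_int (B * n) + b) - (of_int (C * n) + c) - (of_int (D * n) + d) + 2
        \<notin> \<int>\<^sub>\<le>\<^sub>0"
begin

definition "X n k = of_int (K * n) + k0 + (of_int k :: complex)"
definition "Y1 n = of_int (A * n) + (a :: complex)"
definition "Y2 n = of_int (B * n) + (b :: complex)"
definition "Y3 n = of_int (C * n) + (c :: complex)"
definition "Y4 n = of_int (D * n) + (d :: complex)"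
definition "S n = Y1 n + Y2 n - Y3 n - Y4 n + 2"
definition "mm = A + B - C - D"
definition "m0 = min 0 mm"
definition "M = \<bar>K\<bar> + \<bar>A\<bar> + \<bar>B\<bar> + \<bar>C\<bar> + \<bar>D\<bar>"
definition "NN = 2 * M + 2"

definition Std :: "int \<Rightarrow> int \<Rightarrow> int \<Rightarrow> int \<Rightarrow> int \<Rightarrow> int \<Rightarrow> int \<Rightarrow> int \<Rightarrow> int \<Rightarrow> int \<Rightarrow> int \<Rightarrow> int \<Rightarrow> complex" where
  "Std e0 e1 e2 e3 e4 e5 e6 e7 e8 e9 n k =
     neg1pow (Y3 n + Y4 n + of_int e0) * Gamma (X n k + Y1 n + of_int e1) * Gamma (X n k + Y2 n + of_int e2)
     * rGamma (X n k + Y3 n + of_int e3) * rGamma (X n k + Y4 n + of_int e4) * Gamma (S n + of_int e5)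
     * rGamma (Y1 n - Y3 n + of_int e6) * rGamma (Y1 n - Y4 n + of_int e7)
     * rGamma (Y2 n - Y3 n + of_int e8) * rGamma (Y2 n - Y4 n + of_int e9)"

definition "TT = Std 0 (- NN) (- NN) NN NN m0 NN NN NN NN"

lemma ka: "k0 + a \<notin> \<int>"
proof
  assume "k0 + a \<in> \<int>"
  then obtain t where t: "k0 + a = of_int t" by (auto elim: Ints_cases)
  have "of_int (K * 0 + (- t)) + k0 + of_int (A * 0) + a \<notin> \<int>\<^sub>\<le>\<^sub>0" using hyp by blast
  moreover have "of_int (K * 0 + (- t)) + k0 + of_int (A * 0) + a = (0::complex)" using t by (simp add: algebra_simps)
  ultimately show False by simp
qed

lemma kb: "k0 + b \<notin> \<int>"
proof
  assume "k0 + b \<in> \<int>"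
  then obtain t where t: "k0 + b = of_int t" by (auto elim: Ints_cases)
  have "of_int (K * 0 + (- t)) + k0 + of_int (B * 0) + b \<notin> \<int>\<^sub>\<le>\<^sub>0" using hyp by blast
  moreover have "of_int (K * 0 + (- t)) + k0 + of_int (B * 0) + b = (0::complex)" using t by (simp add: algebra_simps)
  ultimately show False by simp
qed

lemma U1_ni: "z - (X n k + Y1 n) \<in> \<int> \<Longrightarrow> z \<notin> \<int>"
proof
  assume 1: "z - (X n k + Y1 n) \<in> \<int>" and 2: "z \<in> \<int>"
  have "k0 + a = z - (z - (X n k + Y1 n)) - of_int (K * n + k + A * n)"
    by (simp add: X_def Y1_def algebra_simps)
  also have "\<dots> \<in> \<int>" using 1 2 by (intro Ints_diff) auto
  finally show False using ka by simp
qed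

lemma U2_ni: "z - (X n k + Y2 n) \<in> \<int> \<Longrightarrow> z \<notin> \<int>"
proof
  assume 1: "z - (X n k + Y2 n) \<in> \<int>" and 2: "z \<in> \<int>"
  have "k0 + b = z - (z - (X n k + Y2 n)) - of_int (K * n + k + B * n)"
    by (simp add: X_def Y2_def algebra_simps)
  also have "\<dots> \<in> \<int>" using 1 2 by (intro Ints_diff) auto
  finally show False using kb by simp
qed

lemma S_succ: "S (n + 1) = S n + of_int mm"
  by (simp add: S_def Y1_def Y2_def Y3_def Y4_def mm_def algebra_simps)

lemma S_lin: "S n = S 0 + of_int (mm * n)"
  by (simp add: S_def Y1_def Y2_def Y3_def Y4_def mm_def algebra_simps)

lemma S_good0: "S n \<notin> \<int>\<^sub>\<le>\<^sub>0"
  using hyp unfolding S_def Y1_def Y2_def Y3_def Y4_def by blast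

lemma S_good_m0: "S n + of_int m0 \<notin> \<int>\<^sub>\<le>\<^sub>0"
proof (cases "mm \<le> 0")
  case True
  then have "S n + of_int m0 = S (n + 1)" by (simp add: m0_def S_succ)
  then show ?thesis using S_good0 by simp
next
  case False
  then show ?thesis using S_good0[of n] by (simp add: m0_def)
qed

lemma S_good: "z - S n = of_int e \<Longrightarrow> m0 \<le> e \<Longrightarrow> z \<notin> \<int>\<^sub>\<le>\<^sub>0"
proof -
  assume z: "z - S n = of_int e" and e: "m0 \<le> e"
  have "S n + of_int m0 + of_int (e - m0) \<notin> \<int>\<^sub>\<le>\<^sub>0" using nonpos_shift[OF S_good_m0, of "e - m0"] e by simp
  moreover have "S n + of_int m0 + of_int (e - m0) = z" using z by (simp add: algebra_simps)
  ultimately show ?thesis by simp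
qed

lemma S0_ni: "mm \<noteq> 0 \<Longrightarrow> S 0 \<notin> \<int>"
proof
  assume mm: "mm \<noteq> 0" and "S 0 \<in> \<int>"
  then obtain t where t: "S 0 = of_int t" by (auto elim: Ints_cases)
  define n where "n = - mm * (\<bar>t\<bar> + 1)"
  have "0 < mm * mm" using mm by (auto simp: zero_less_mult_iff linorder_neq_iff)
  then have "1 * (\<bar>t\<bar> + 1) \<le> (mm * mm) * (\<bar>t\<bar> + 1)" by (intro mult_right_mono) auto
  then have "mm * n \<le> - (\<bar>t\<bar> + 1)" unfolding n_def by (simp add: algebra_simps)
  then have "t + mm * n \<le> 0" by simp
  moreover have "S n = of_int (t + mm * n)" using S_lin[of n] t by simp
  ultimately have "S n \<in> \<int>\<^sub>\<le>\<^sub>0" using nonpos_Ints_of_int by metis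
  then show False using S_good0 by simp
qed

lemma hyp_T: "hypergeometric2 TT"
proof -
  have f0: "hypergeometric2 (\<lambda>n k. neg1pow (Y3 n + Y4 n + of_int 0))"
    by (rule hyp2_cong[OF hyp_neg1pow[of "C + D" 0 "c + d"]]) (simp add: Y3_def Y4_def algebra_simps)
  have f1: "hypergeometric2 (\<lambda>n k. Gamma (X n k + Y1 n + of_int (- NN)))"
    by (rule hyp2_cong[OF hyp_Gamma[of "k0 + a - of_int NN" "K + A" 1]])
       (use ka in \<open>auto simp: X_def Y1_def algebra_simps dest: Ints_diff[of _ "of_int NN"]\<close>)
  have f2: "hypergeometric2 (\<lambda>n k. Gamma (X n k + Y2 n + of_int (- NN)))"
    by (rule hyp2_cong[OF hyp_Gamma[of "k0 + b - of_int NN" "K + B" 1]])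
       (use kb in \<open>auto simp: X_def Y2_def algebra_simps dest: Ints_diff[of _ "of_int NN"]\<close>)
  have f3: "hypergeometric2 (\<lambda>n k. rGamma (X n k + Y3 n + of_int NN))"
    by (rule hyp2_cong[OF hyp_rGamma[of "K + C" 1 "k0 + c + of_int NN"]]) (simp add: X_def Y3_def algebra_simps)
  have f4: "hypergeometric2 (\<lambda>n k. rGamma (X n k + Y4 n + of_int NN))"
    by (rule hyp2_cong[OF hyp_rGamma[of "K + D" 1 "k0 + d + of_int NN"]]) (simp add: X_def Y4_def algebra_simps)
  have f5: "hypergeometric2 (\<lambda>n k. Gamma (S n + of_int m0))"
  proof (cases "mm = 0")
    case True
    then have Sc: "S n = S 0" for n using S_lin[of n] by simp
    show ?thesis
    proof (rule hyp2_cong[OF hyp2_const[of "Gamma (S 0 + of_int m0)"]])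
      fix n k show "Gamma (S n + of_int m0) = Gamma (S 0 + of_int m0)" using Sc[of n] by simp
    qed
  next
    case False
    have "S 0 + of_int m0 \<notin> \<int>" using S0_ni[OF False] by (auto dest: Ints_diff[of _ "of_int m0"])
    from hyp_Gamma[OF this, of mm 0] show ?thesis
      by (rule hyp2_cong) (subst S_lin, simp add: algebra_simps)
  qed
  have f6: "hypergeometric2 (\<lambda>n k. rGamma (Y1 n - Y3 n + of_int NN))"
    by (rule hyp2_cong[OF hyp_rGamma[of "A - C" 0 "a - c + of_int NN"]]) (simp add: Y1_def Y3_def algebra_simps)
  have f7: "hypergeometric2 (\<lambda>n k. rGamma (Y1 n - Y4 n + of_int NN))"
    by (rule hyp2_cong[OF hyp_rGamma[of "A - D" 0 "a - d + of_int NN"]]) (simp add: Y1_def Y4_def algebra_simps)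
  have f8: "hypergeometric2 (\<lambda>n k. rGamma (Y2 n - Y3 n + of_int NN))"
    by (rule hyp2_cong[OF hyp_rGamma[of "B - C" 0 "b - c + of_int NN"]]) (simp add: Y2_def Y3_def algebra_simps)
  have f9: "hypergeometric2 (\<lambda>n k. rGamma (Y2 n - Y4 n + of_int NN))"
    by (rule hyp2_cong[OF hyp_rGamma[of "B - D" 0 "b - d + of_int NN"]]) (simp add: Y2_def Y4_def algebra_simps)
  have "hypergeometric2 (\<lambda>n k. neg1pow (Y3 n + Y4 n + of_int 0) * Gamma (X n k + Y1 n + of_int (- NN)) * Gamma (X n k + Y2 n + of_int (- NN))
     * rGamma (X n k + Y3 n + of_int NN) * rGamma (X n k + Y4 n + of_int NN) * Gamma (S n + of_int m0)
     * rGamma (Y1 n - Y3 n + of_int NN) * rGamma (Y1 n - Y4 n + of_int NN)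
     * rGamma (Y2 n - Y3 n + of_int NN) * rGamma (Y2 n - Y4 n + of_int NN))"
    by (intro hyp2_mult f0 f1 f2 f3 f4 f5 f6 f7 f8 f9)
  then show ?thesis unfolding TT_def Std_def[abs_def] .
qed

end



context wzl begin

lemma ip_X: "ip X"
proof -
  have "ip (\<lambda>n k. of_int K * of_int n + k0 + of_int k)" by (intro ip_add ip_mult ip_const ip_n ip_k)
  then show ?thesis by (simp add: X_def[abs_def])
qed

lemma ip_Y1: "ip (\<lambda>n k. Y1 n)"
proof -
  have "ip (\<lambda>n k. of_int A * of_int n + a)" by (intro ip_add ip_mult ip_const ip_n)
  then show ?thesis by (simp add: Y1_def)
qed
lemma ip_Y2: "ip (\<lambda>n k. Y2 n)"
proof -
  have "ip (\<lambda>n k. of_int B * of_int n + b)" by (intro ip_add ip_mult ip_const ip_n)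
  then show ?thesis by (simp add: Y2_def)
qed
lemma ip_Y3: "ip (\<lambda>n k. Y3 n)"
proof -
  have "ip (\<lambda>n k. of_int C * of_int n + c)" by (intro ip_add ip_mult ip_const ip_n)
  then show ?thesis by (simp add: Y3_def)
qed
lemma ip_Y4: "ip (\<lambda>n k. Y4 n)"
proof -
  have "ip (\<lambda>n k. of_int D * of_int n + d)" by (intro ip_add ip_mult ip_const ip_n)
  then show ?thesis by (simp add: Y4_def)
qed
lemma ip_S: "ip (\<lambda>n k. S n)"
  unfolding S_def by (intro ip_add ip_diff ip_Y1 ip_Y2 ip_Y3 ip_Y4 ip_const)

lemma ip_X': "ip (\<lambda>n k. X n k)" using ip_X by simp

lemma Std_mult:
  assumes "- NN \<le> e1" "- NN \<le> e2" "e3 \<le> NN" "e4 \<le> NN" "m0 \<le> e5" "e6 \<le> NN" "e7 \<le> NN" "e8 \<le> NN" "e9 \<le> NN"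
  shows "mult_of (Std e0 e1 e2 e3 e4 e5 e6 e7 e8 e9) TT"
proof -
  have g1: "X n k + Y1 n + of_int (- NN) \<notin> \<int>\<^sub>\<le>\<^sub>0" for n k
    by (rule not_in_Ints_imp_not_in_nonpos_Ints, rule U1_ni[of _ n k]) simp
  have g2: "X n k + Y2 n + of_int (- NN) \<notin> \<int>\<^sub>\<le>\<^sub>0" for n k
    by (rule not_in_Ints_imp_not_in_nonpos_Ints, rule U2_ni[of _ n k]) simp
  have "mult_of (\<lambda>n k. neg1pow (Y3 n + Y4 n + of_int e0) * Gamma (X n k + Y1 n + of_int e1) * Gamma (X n k + Y2 n + of_int e2)
     * rGamma (X n k + Y3 n + of_int e3) * rGamma (X n k + Y4 n + of_int e4) * Gamma (S n + of_int e5)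
     * rGamma (Y1 n - Y3 n + of_int e6) * rGamma (Y1 n - Y4 n + of_int e7)
     * rGamma (Y2 n - Y3 n + of_int e8) * rGamma (Y2 n - Y4 n + of_int e9))
    (\<lambda>n k. neg1pow (Y3 n + Y4 n + of_int 0) * Gamma (X n k + Y1 n + of_int (- NN)) * Gamma (X n k + Y2 n + of_int (- NN))
     * rGamma (X n k + Y3 n + of_int NN) * rGamma (X n k + Y4 n + of_int NN) * Gamma (S n + of_int m0)
     * rGamma (Y1 n - Y3 n + of_int NN) * rGamma (Y1 n - Y4 n + of_int NN)
     * rGamma (Y2 n - Y3 n + of_int NN) * rGamma (Y2 n - Y4 n + of_int NN))"
    apply (intro mult_of_mult mult_of_neg1pow')
    apply (rule mult_of_Gamma; (intro ip_add ip_X' ip_Y1 g1 assms)?)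
    apply (rule mult_of_Gamma; (intro ip_add ip_X' ip_Y2 g2 assms)?)
    apply (rule mult_of_rGamma; (intro ip_add ip_X' ip_Y3 assms)?)
    apply (rule mult_of_rGamma; (intro ip_add ip_X' ip_Y4 assms)?)
    apply (rule mult_of_Gamma; (intro ip_S assms S_good_m0)?)
    apply (rule mult_of_rGamma; (intro ip_diff ip_Y1 ip_Y3 assms)?)
    apply (rule mult_of_rGamma; (intro ip_diff ip_Y1 ip_Y4 assms)?)
    apply (rule mult_of_rGamma; (intro ip_diff ip_Y2 ip_Y3 assms)?)
    apply (rule mult_of_rGamma; (intro ip_diff ip_Y2 ip_Y4 assms)?)
    done
  then show ?thesis unfolding TT_def Std_def[abs_def] .
qed

lemma F0_std:
  assumes "x = X n k + of_int p0" "y1 = Y1 n + of_int p1" "y2 = Y2 n + of_int p2" "y3 = Y3 n + of_int p3" "y4 = Y4 n + of_int p4"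
  shows "F0 x y1 y2 y3 y4 = Std (p3 + p4) (p0 + p1) (p0 + p2) (p0 + p3) (p0 + p4) (p1 + p2 - p3 - p4)
            (p1 - p3 + 1) (p1 - p4 + 1) (p2 - p3 + 1) (p2 - p4 + 1) n k"
  unfolding F0_def Std_def S_def assms by (simp add: algebra_simps)

lemma Ga_std:
  assumes "x = X n k + of_int p0" "y1 = Y1 n + of_int p1" "y2 = Y2 n + of_int p2" "y3 = Y3 n + of_int p3" "y4 = Y4 n + of_int p4"
  shows "Ga x y1 y2 y3 y4 = Std (p3 + p4) (p0 + p1) (p0 + p2) (p0 + p3 - 1) (p0 + p4 - 1) (p1 + p2 - p3 - p4)
            (p1 - p3 + 2) (p1 - p4 + 2) (p2 - p3 + 1) (p2 - p4 + 1) n k"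
  unfolding Ga_def Std_def S_def assms by (simp add: algebra_simps)

lemma Gb_std:
  assumes "x = X n k + of_int p0" "y1 = Y1 n + of_int p1" "y2 = Y2 n + of_int p2" "y3 = Y3 n + of_int p3" "y4 = Y4 n + of_int p4"
  shows "Gb x y1 y2 y3 y4 = Std (p3 + p4) (p0 + p1) (p0 + p2) (p0 + p3 - 1) (p0 + p4 - 1) (p1 + p2 - p3 - p4)
            (p1 - p3 + 1) (p1 - p4 + 1) (p2 - p3 + 2) (p2 - p4 + 2) n k"
  unfolding Gb_def Ga_def Std_def S_def assms by (simp add: algebra_simps)

lemma Gc_std:
  assumes "x = X n k + of_int p0" "y1 = Y1 n + of_int p1" "y2 = Y2 n + of_int p2" "y3 = Y3 n + of_int p3" "y4 = Y4 n + of_int p4"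
  shows "Gc x y1 y2 y3 y4 = - Std (p3 + p4) (p0 + p1) (p0 + p2) (p0 + p3) (p0 + p4 - 1) (p1 + p2 - p3 - p4 - 1)
            (p1 - p3 + 1) (p1 - p4 + 1) (p2 - p3 + 1) (p2 - p4 + 1) n k"
  unfolding Gc_def Std_def S_def assms by (simp add: algebra_simps)

lemma Gd_std:
  assumes "x = X n k + of_int p0" "y1 = Y1 n + of_int p1" "y2 = Y2 n + of_int p2" "y3 = Y3 n + of_int p3" "y4 = Y4 n + of_int p4"
  shows "Gd x y1 y2 y3 y4 = - Std (p3 + p4) (p0 + p1) (p0 + p2) (p0 + p3 - 1) (p0 + p4) (p1 + p2 - p3 - p4 - 1)
            (p1 - p3 + 1) (p1 - p4 + 1) (p2 - p3 + 1) (p2 - p4 + 1) n k"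
  unfolding Gd_def Gc_def Std_def S_def assms by (simp add: algebra_simps)

end



context wzl begin

lemma F0_mult:
  assumes "\<And>n k. xf n k = X n k + of_int pa" "\<And>n k. f1 n k = Y1 n + of_int pb" "\<And>n k. f2 n k = Y2 n + of_int pc"
    "\<And>n k. f3 n k = Y3 n + of_int pd" "\<And>n k. f4 n k = Y4 n + of_int pe"
    "\<bar>pa\<bar> \<le> M" "\<bar>pb\<bar> \<le> M" "\<bar>pc\<bar> \<le> M" "\<bar>pd\<bar> \<le> M" "\<bar>pe\<bar> \<le> M" "m0 \<le> pb + pc - pd - pe"
  shows "mult_of (\<lambda>n k. F0 (xf n k) (f1 n k) (f2 n k) (f3 n k) (f4 n k)) TT"
proof -
  have eq: "F0 (xf n k) (f1 n k) (f2 n k) (f3 n k) (f4 n k) = Std (pd + pe) (pa + pb) (pa + pc) (pa + pd) (pa + pe) (pb + pc - pd - pe) (pb - pd + 1) (pb - pe + 1) (pc - pd + 1) (pc - pe + 1) n k" for n k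
    by (rule F0_std) (simp_all add: assms(1-5))
  have m: "mult_of (Std (pd + pe) (pa + pb) (pa + pc) (pa + pd) (pa + pe) (pb + pc - pd - pe) (pb - pd + 1) (pb - pe + 1) (pc - pd + 1) (pc - pe + 1)) TT"
    by (rule Std_mult) (use assms(6-) in \<open>simp_all add: NN_def abs_le_iff\<close>)
  show ?thesis
    by (rule mult_of_cong[OF m]) (simp add: eq)
qed

lemma Ga_mult:
  assumes "\<And>n k. xf n k = X n k + of_int pa" "\<And>n k. f1 n k = Y1 n + of_int pb" "\<And>n k. f2 n k = Y2 n + of_int pc"
    "\<And>n k. f3 n k = Y3 n + of_int pd" "\<And>n k. f4 n k = Y4 n + of_int pe"
    "\<bar>pa\<bar> \<le> M" "\<bar>pb\<bar> \<le> M" "\<bar>pc\<bar> \<le> M" "\<bar>pd\<bar> \<le> M" "\<bar>pe\<bar> \<le> M" "m0 \<le> pb + pc - pd - pe"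
  shows "mult_of (\<lambda>n k. Ga (xf n k) (f1 n k) (f2 n k) (f3 n k) (f4 n k)) TT"
proof -
  have eq: "Ga (xf n k) (f1 n k) (f2 n k) (f3 n k) (f4 n k) = Std (pd + pe) (pa + pb) (pa + pc) (pa + pd - 1) (pa + pe - 1) (pb + pc - pd - pe) (pb - pd + 2) (pb - pe + 2) (pc - pd + 1) (pc - pe + 1) n k" for n k
    by (rule Ga_std) (simp_all add: assms(1-5))
  have m: "mult_of (Std (pd + pe) (pa + pb) (pa + pc) (pa + pd - 1) (pa + pe - 1) (pb + pc - pd - pe) (pb - pd + 2) (pb - pe + 2) (pc - pd + 1) (pc - pe + 1)) TT"
    by (rule Std_mult) (use assms(6-) in \<open>simp_all add: NN_def abs_le_iff\<close>)
  show ?thesis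
    by (rule mult_of_cong[OF m]) (simp add: eq)
qed

lemma Gb_mult:
  assumes "\<And>n k. xf n k = X n k + of_int pa" "\<And>n k. f1 n k = Y1 n + of_int pb" "\<And>n k. f2 n k = Y2 n + of_int pc"
    "\<And>n k. f3 n k = Y3 n + of_int pd" "\<And>n k. f4 n k = Y4 n + of_int pe"
    "\<bar>pa\<bar> \<le> M" "\<bar>pb\<bar> \<le> M" "\<bar>pc\<bar> \<le> M" "\<bar>pd\<bar> \<le> M" "\<bar>pe\<bar> \<le> M" "m0 \<le> pb + pc - pd - pe"
  shows "mult_of (\<lambda>n k. Gb (xf n k) (f1 n k) (f2 n k) (f3 n k) (f4 n k)) TT"
proof -
  have eq: "Gb (xf n k) (f1 n k) (f2 n k) (f3 n k) (f4 n k) = Std (pd + pe) (pa + pb) (pa + pc) (pa + pd - 1) (pa + pe - 1) (pb + pc - pd - pe) (pb - pd + 1) (pb - pe + 1) (pc - pd + 2) (pc - pe + 2) n k" for n k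
    by (rule Gb_std) (simp_all add: assms(1-5))
  have m: "mult_of (Std (pd + pe) (pa + pb) (pa + pc) (pa + pd - 1) (pa + pe - 1) (pb + pc - pd - pe) (pb - pd + 1) (pb - pe + 1) (pc - pd + 2) (pc - pe + 2)) TT"
    by (rule Std_mult) (use assms(6-) in \<open>simp_all add: NN_def abs_le_iff\<close>)
  show ?thesis
    by (rule mult_of_cong[OF m]) (simp add: eq)
qed

lemma Gc_mult:
  assumes "\<And>n k. xf n k = X n k + of_int pa" "\<And>n k. f1 n k = Y1 n + of_int pb" "\<And>n k. f2 n k = Y2 n + of_int pc"
    "\<And>n k. f3 n k = Y3 n + of_int pd" "\<And>n k. f4 n k = Y4 n + of_int pe"
    "\<bar>pa\<bar> \<le> M" "\<bar>pb\<bar> \<le> M" "\<bar>pc\<bar> \<le> M" "\<bar>pd\<bar> \<le> M" "\<bar>pe\<bar> \<le> M" "m0 \<le> pb + pc - pd - pe - 1"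
  shows "mult_of (\<lambda>n k. Gc (xf n k) (f1 n k) (f2 n k) (f3 n k) (f4 n k)) TT"
proof -
  have eq: "Gc (xf n k) (f1 n k) (f2 n k) (f3 n k) (f4 n k) = - Std (pd + pe) (pa + pb) (pa + pc) (pa + pd) (pa + pe - 1) (pb + pc - pd - pe - 1) (pb - pd + 1) (pb - pe + 1) (pc - pd + 1) (pc - pe + 1) n k" for n k
    by (rule Gc_std) (simp_all add: assms(1-5))
  have m: "mult_of (Std (pd + pe) (pa + pb) (pa + pc) (pa + pd) (pa + pe - 1) (pb + pc - pd - pe - 1) (pb - pd + 1) (pb - pe + 1) (pc - pd + 1) (pc - pe + 1)) TT"
    by (rule Std_mult) (use assms(6-) in \<open>simp_all add: NN_def abs_le_iff\<close>)
  show ?thesis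
    by (rule mult_of_cong[OF mult_of_uminus[OF m]]) (simp add: eq)
qed

lemma Gd_mult:
  assumes "\<And>n k. xf n k = X n k + of_int pa" "\<And>n k. f1 n k = Y1 n + of_int pb" "\<And>n k. f2 n k = Y2 n + of_int pc"
    "\<And>n k. f3 n k = Y3 n + of_int pd" "\<And>n k. f4 n k = Y4 n + of_int pe"
    "\<bar>pa\<bar> \<le> M" "\<bar>pb\<bar> \<le> M" "\<bar>pc\<bar> \<le> M" "\<bar>pd\<bar> \<le> M" "\<bar>pe\<bar> \<le> M" "m0 \<le> pb + pc - pd - pe - 1"
  shows "mult_of (\<lambda>n k. Gd (xf n k) (f1 n k) (f2 n k) (f3 n k) (f4 n k)) TT"
proof -
  have eq: "Gd (xf n k) (f1 n k) (f2 n k) (f3 n k) (f4 n k) = - Std (pd + pe) (pa + pb) (pa + pc) (pa + pd - 1) (pa + pe) (pb + pc - pd - pe - 1) (pb - pd + 1) (pb - pe + 1) (pc - pd + 1) (pc - pe + 1) n k" for n k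
    by (rule Gd_std) (simp_all add: assms(1-5))
  have m: "mult_of (Std (pd + pe) (pa + pb) (pa + pc) (pa + pd - 1) (pa + pe) (pb + pc - pd - pe - 1) (pb - pd + 1) (pb - pe + 1) (pc - pd + 1) (pc - pe + 1)) TT"
    by (rule Std_mult) (use assms(6-) in \<open>simp_all add: NN_def abs_le_iff\<close>)
  show ?thesis
    by (rule mult_of_cong[OF mult_of_uminus[OF m]]) (simp add: eq)
qed

end



context wzl begin

definition "Ap = max A 0"
definition "Bp = max B 0"
definition "Cp = max C 0"
definition "Dp = max D 0"
definition "An = min A 0"
definition "Bn = min B 0"
definition "Cn = min C 0"
definition "Dn = min D 0"

definition "GG n k = Hs Ap (\<lambda>i. Ga (X n k) (Y1 n + of_int i) (Y2 n) (Y3 n) (Y4 n))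
 + Hs Bp (\<lambda>i. Gb (X n k) (Y1 n + of_int Ap) (Y2 n + of_int i) (Y3 n) (Y4 n))
 + Hs Cn (\<lambda>i. Gc (X n k) (Y1 n + of_int Ap) (Y2 n + of_int Bp) (Y3 n + of_int i) (Y4 n))
 + Hs Dn (\<lambda>i. Gd (X n k) (Y1 n + of_int Ap) (Y2 n + of_int Bp) (Y3 n + of_int Cn) (Y4 n + of_int i))
 + Hs An (\<lambda>i. Ga (X n k) (Y1 n + of_int Ap + of_int i) (Y2 n + of_int Bp) (Y3 n + of_int Cn) (Y4 n + of_int Dn))
 + Hs Bn (\<lambda>i. Gb (X n k) (Y1 n + of_int Ap + of_int An) (Y2 n + of_int Bp + of_int i) (Y3 n + of_int Cn) (Y4 n + of_int Dn))
 + Hs Cp (\<lambda>i. Gc (X n k) (Y1 n + of_int Ap + of_int An) (Y2 n + of_int Bp + of_int Bn) (Y3 n + of_int Cn + of_int i) (Y4 n + of_int Dn))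
 + Hs Dp (\<lambda>i. Gd (X n k) (Y1 n + of_int Ap + of_int An) (Y2 n + of_int Bp + of_int Bn) (Y3 n + of_int Cn + of_int Cp) (Y4 n + of_int Dn + of_int i))
 + Hs K (\<lambda>i. F0 (X n k + of_int i) (Y1 n + of_int Ap + of_int An) (Y2 n + of_int Bp + of_int Bn) (Y3 n + of_int Cn + of_int Cp) (Y4 n + of_int Dn + of_int Dp))"

lemma t1: "mult_of (\<lambda>n k. Hs Ap (\<lambda>i. Ga (X n k) (Y1 n + of_int i) (Y2 n) (Y3 n) (Y4 n))) TT"
proof (rule mult_of_Hs)
  fix i assume i: "min 0 Ap \<le> i" "i < max 0 Ap"
  show "mult_of (\<lambda>n k. Ga (X n k) (Y1 n + of_int i) (Y2 n) (Y3 n) (Y4 n)) TT"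
    by (rule Ga_mult[where pa=0 and pb=i and pc=0 and pd=0 and pe=0]) (use i in \<open>simp_all add: M_def m0_def mm_def Ap_def Bp_def Cp_def Dp_def An_def Bn_def Cn_def Dn_def max_def min_def abs_if split: if_splits\<close>)
qed

lemma t2: "mult_of (\<lambda>n k. Hs Bp (\<lambda>i. Gb (X n k) (Y1 n + of_int Ap) (Y2 n + of_int i) (Y3 n) (Y4 n))) TT"
proof (rule mult_of_Hs)
  fix i assume i: "min 0 Bp \<le> i" "i < max 0 Bp"
  show "mult_of (\<lambda>n k. Gb (X n k) (Y1 n + of_int Ap) (Y2 n + of_int i) (Y3 n) (Y4 n)) TT"
    by (rule Gb_mult[where pa=0 and pb=Ap and pc=i and pd=0 and pe=0]) (use i in \<open>simp_all add: M_def m0_def mm_def Ap_def Bp_def Cp_def Dp_def An_def Bn_def Cn_def Dn_def max_def min_def abs_if split: if_splits\<close>)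
qed

lemma t3: "mult_of (\<lambda>n k. Hs Cn (\<lambda>i. Gc (X n k) (Y1 n + of_int Ap) (Y2 n + of_int Bp) (Y3 n + of_int i) (Y4 n))) TT"
proof (rule mult_of_Hs)
  fix i assume i: "min 0 Cn \<le> i" "i < max 0 Cn"
  show "mult_of (\<lambda>n k. Gc (X n k) (Y1 n + of_int Ap) (Y2 n + of_int Bp) (Y3 n + of_int i) (Y4 n)) TT"
    by (rule Gc_mult[where pa=0 and pb=Ap and pc=Bp and pd=i and pe=0]) (use i in \<open>simp_all add: M_def m0_def mm_def Ap_def Bp_def Cp_def Dp_def An_def Bn_def Cn_def Dn_def max_def min_def abs_if split: if_splits\<close>)
qed

lemma t4: "mult_of (\<lambda>n k. Hs Dn (\<lambda>i. Gd (X n k) (Y1 n + of_int Ap) (Y2 n + of_int Bp) (Y3 n + of_int Cn) (Y4 n + of_int i))) TT"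
proof (rule mult_of_Hs)
  fix i assume i: "min 0 Dn \<le> i" "i < max 0 Dn"
  show "mult_of (\<lambda>n k. Gd (X n k) (Y1 n + of_int Ap) (Y2 n + of_int Bp) (Y3 n + of_int Cn) (Y4 n + of_int i)) TT"
    by (rule Gd_mult[where pa=0 and pb=Ap and pc=Bp and pd=Cn and pe=i]) (use i in \<open>simp_all add: M_def m0_def mm_def Ap_def Bp_def Cp_def Dp_def An_def Bn_def Cn_def Dn_def max_def min_def abs_if split: if_splits\<close>)
qed

lemma t5: "mult_of (\<lambda>n k. Hs An (\<lambda>i. Ga (X n k) (Y1 n + of_int Ap + of_int i) (Y2 n + of_int Bp) (Y3 n + of_int Cn) (Y4 n + of_int Dn))) TT"
proof (rule mult_of_Hs)
  fix i assume i: "min 0 An \<le> i" "i < max 0 An"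
  show "mult_of (\<lambda>n k. Ga (X n k) (Y1 n + of_int Ap + of_int i) (Y2 n + of_int Bp) (Y3 n + of_int Cn) (Y4 n + of_int Dn)) TT"
    by (rule Ga_mult[where pa=0 and pb="Ap+i" and pc=Bp and pd=Cn and pe=Dn]) (use i in \<open>simp_all add: M_def m0_def mm_def Ap_def Bp_def Cp_def Dp_def An_def Bn_def Cn_def Dn_def max_def min_def abs_if split: if_splits\<close>)
qed

lemma t6: "mult_of (\<lambda>n k. Hs Bn (\<lambda>i. Gb (X n k) (Y1 n + of_int Ap + of_int An) (Y2 n + of_int Bp + of_int i) (Y3 n + of_int Cn) (Y4 n + of_int Dn))) TT"
proof (rule mult_of_Hs)
  fix i assume i: "min 0 Bn \<le> i" "i < max 0 Bn"
  show "mult_of (\<lambda>n k. Gb (X n k) (Y1 n + of_int Ap + of_int An) (Y2 n + of_int Bp + of_int i) (Y3 n + of_int Cn) (Y4 n + of_int Dn)) TT"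
    by (rule Gb_mult[where pa=0 and pb="Ap+An" and pc="Bp+i" and pd=Cn and pe=Dn]) (use i in \<open>simp_all add: M_def m0_def mm_def Ap_def Bp_def Cp_def Dp_def An_def Bn_def Cn_def Dn_def max_def min_def abs_if split: if_splits\<close>)
qed

lemma t7: "mult_of (\<lambda>n k. Hs Cp (\<lambda>i. Gc (X n k) (Y1 n + of_int Ap + of_int An) (Y2 n + of_int Bp + of_int Bn) (Y3 n + of_int Cn + of_int i) (Y4 n + of_int Dn))) TT"
proof (rule mult_of_Hs)
  fix i assume i: "min 0 Cp \<le> i" "i < max 0 Cp"
  show "mult_of (\<lambda>n k. Gc (X n k) (Y1 n + of_int Ap + of_int An) (Y2 n + of_int Bp + of_int Bn) (Y3 n + of_int Cn + of_int i) (Y4 n + of_int Dn)) TT"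
    by (rule Gc_mult[where pa=0 and pb="Ap+An" and pc="Bp+Bn" and pd="Cn+i" and pe=Dn]) (use i in \<open>simp_all add: M_def m0_def mm_def Ap_def Bp_def Cp_def Dp_def An_def Bn_def Cn_def Dn_def max_def min_def abs_if split: if_splits\<close>)
qed

lemma t8: "mult_of (\<lambda>n k. Hs Dp (\<lambda>i. Gd (X n k) (Y1 n + of_int Ap + of_int An) (Y2 n + of_int Bp + of_int Bn) (Y3 n + of_int Cn + of_int Cp) (Y4 n + of_int Dn + of_int i))) TT"
proof (rule mult_of_Hs)
  fix i assume i: "min 0 Dp \<le> i" "i < max 0 Dp"
  show "mult_of (\<lambda>n k. Gd (X n k) (Y1 n + of_int Ap + of_int An) (Y2 n + of_int Bp + of_int Bn) (Y3 n + of_int Cn + of_int Cp) (Y4 n + of_int Dn + of_int i)) TT"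
    by (rule Gd_mult[where pa=0 and pb="Ap+An" and pc="Bp+Bn" and pd="Cn+Cp" and pe="Dn+i"]) (use i in \<open>simp_all add: M_def m0_def mm_def Ap_def Bp_def Cp_def Dp_def An_def Bn_def Cn_def Dn_def max_def min_def abs_if split: if_splits\<close>)
qed

lemma t9: "mult_of (\<lambda>n k. Hs K (\<lambda>i. F0 (X n k + of_int i) (Y1 n + of_int Ap + of_int An) (Y2 n + of_int Bp + of_int Bn) (Y3 n + of_int Cn + of_int Cp) (Y4 n + of_int Dn + of_int Dp))) TT"
proof (rule mult_of_Hs)
  fix i assume i: "min 0 K \<le> i" "i < max 0 K"
  show "mult_of (\<lambda>n k. F0 (X n k + of_int i) (Y1 n + of_int Ap + of_int An) (Y2 n + of_int Bp + of_int Bn) (Y3 n + of_int Cn + of_int Cp) (Y4 n + of_int Dn + of_int Dp)) TT"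
    by (rule F0_mult[where pa=i and pb="Ap+An" and pc="Bp+Bn" and pd="Cn+Cp" and pe="Dn+Dp"]) (use i in \<open>simp_all add: M_def m0_def mm_def Ap_def Bp_def Cp_def Dp_def An_def Bn_def Cn_def Dn_def max_def min_def abs_if split: if_splits\<close>)
qed

lemma GG_mult: "mult_of GG TT"
proof -
  have "mult_of (\<lambda>n k. GG n k) TT" unfolding GG_def by (intro mult_of_add t1 t2 t3 t4 t5 t6 t7 t8 t9)
  then show ?thesis by simp
qed

lemma hyp_GG: "hypergeometric2 GG"
  by (rule mult_of_hyp[OF GG_mult hyp_T])

end



context wzl begin

lemma X_succ: "X n (k + 1) = X n k + 1"
  by (simp add: X_def)

lemma wz: "F0 (of_int (K * (n + 1)) + k0 + of_int k) (of_int (A * (n + 1)) + a) (of_int (B * (n + 1)) + b) (of_int (C * (n + 1)) + c) (of_int (D * (n + 1)) + d) - F0 (of_int (K * n) + k0 + of_int k) (of_int (A * n) + a) (of_int (B * n) + b) (of_int (C * n) + c) (of_int (D * n) + d) = GG n (k + 1) - GG n k"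
proof -
  have m1: "F0 (X n k) (Y1 n + of_int Ap) (Y2 n) (Y3 n) (Y4 n) - F0 (X n k) (Y1 n) (Y2 n) (Y3 n) (Y4 n) = Hs Ap (\<lambda>i. Ga (X n k + 1) (Y1 n + of_int i) (Y2 n) (Y3 n) (Y4 n)) - Hs Ap (\<lambda>i. Ga (X n k) (Y1 n + of_int i) (Y2 n) (Y3 n) (Y4 n))"
    apply (rule move_a)
      apply (rule U1_ni[of _ n k], simp)
     apply (rule U2_ni[of _ n k], simp)
    subgoal for i by (rule S_good[where n=n and e="i"]) (simp_all add: S_def algebra_simps m0_def mm_def Ap_def Bp_def Cp_def Dp_def An_def Bn_def Cn_def Dn_def max_def min_def split: if_splits)
    done
  have m2: "F0 (X n k) (Y1 n + of_int Ap) (Y2 n + of_int Bp) (Y3 n) (Y4 n) - F0 (X n k) (Y1 n + of_int Ap) (Y2 n) (Y3 n) (Y4 n) = Hs Bp (\<lambda>i. Gb (X n k + 1) (Y1 n + of_int Ap) (Y2 n + of_int i) (Y3 n) (Y4 n)) - Hs Bp (\<lambda>i. Gb (X n k) (Y1 n + of_int Ap) (Y2 n + of_int i) (Y3 n) (Y4 n))"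
    apply (rule move_b)
      apply (rule U1_ni[of _ n k], simp)
     apply (rule U2_ni[of _ n k], simp)
    subgoal for i by (rule S_good[where n=n and e="Ap + i"]) (simp_all add: S_def algebra_simps m0_def mm_def Ap_def Bp_def Cp_def Dp_def An_def Bn_def Cn_def Dn_def max_def min_def split: if_splits)
    done
  have m3: "F0 (X n k) (Y1 n + of_int Ap) (Y2 n + of_int Bp) (Y3 n + of_int Cn) (Y4 n) - F0 (X n k) (Y1 n + of_int Ap) (Y2 n + of_int Bp) (Y3 n) (Y4 n) = Hs Cn (\<lambda>i. Gc (X n k + 1) (Y1 n + of_int Ap) (Y2 n + of_int Bp) (Y3 n + of_int i) (Y4 n)) - Hs Cn (\<lambda>i. Gc (X n k) (Y1 n + of_int Ap) (Y2 n + of_int Bp) (Y3 n + of_int i) (Y4 n))"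
    apply (rule move_c)
      apply (rule U1_ni[of _ n k], simp)
     apply (rule U2_ni[of _ n k], simp)
    subgoal for i by (rule S_good[where n=n and e="Ap + Bp - i"]) (simp_all add: S_def algebra_simps m0_def mm_def Ap_def Bp_def Cp_def Dp_def An_def Bn_def Cn_def Dn_def max_def min_def split: if_splits)
    done
  have m4: "F0 (X n k) (Y1 n + of_int Ap) (Y2 n + of_int Bp) (Y3 n + of_int Cn) (Y4 n + of_int Dn) - F0 (X n k) (Y1 n + of_int Ap) (Y2 n + of_int Bp) (Y3 n + of_int Cn) (Y4 n) = Hs Dn (\<lambda>i. Gd (X n k + 1) (Y1 n + of_int Ap) (Y2 n + of_int Bp) (Y3 n + of_int Cn) (Y4 n + of_int i)) - Hs Dn (\<lambda>i. Gd (X n k) (Y1 n + of_int Ap) (Y2 n + of_int Bp) (Y3 n + of_int Cn) (Y4 n + of_int i))"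
    apply (rule move_d)
      apply (rule U1_ni[of _ n k], simp)
     apply (rule U2_ni[of _ n k], simp)
    subgoal for i by (rule S_good[where n=n and e="Ap + Bp - Cn - i"]) (simp_all add: S_def algebra_simps m0_def mm_def Ap_def Bp_def Cp_def Dp_def An_def Bn_def Cn_def Dn_def max_def min_def split: if_splits)
    done
  have m5: "F0 (X n k) (Y1 n + of_int Ap + of_int An) (Y2 n + of_int Bp) (Y3 n + of_int Cn) (Y4 n + of_int Dn) - F0 (X n k) (Y1 n + of_int Ap) (Y2 n + of_int Bp) (Y3 n + of_int Cn) (Y4 n + of_int Dn) = Hs An (\<lambda>i. Ga (X n k + 1) (Y1 n + of_int Ap + of_int i) (Y2 n + of_int Bp) (Y3 n + of_int Cn) (Y4 n + of_int Dn)) - Hs An (\<lambda>i. Ga (X n k) (Y1 n + of_int Ap + of_int i) (Y2 n + of_int Bp) (Y3 n + of_int Cn) (Y4 n + of_int Dn))"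
    apply (rule move_a)
      apply (rule U1_ni[of _ n k], simp)
     apply (rule U2_ni[of _ n k], simp)
    subgoal for i by (rule S_good[where n=n and e="Ap + Bp - Cn - Dn + i"]) (simp_all add: S_def algebra_simps m0_def mm_def Ap_def Bp_def Cp_def Dp_def An_def Bn_def Cn_def Dn_def max_def min_def split: if_splits)
    done
  have m6: "F0 (X n k) (Y1 n + of_int Ap + of_int An) (Y2 n + of_int Bp + of_int Bn) (Y3 n + of_int Cn) (Y4 n + of_int Dn) - F0 (X n k) (Y1 n + of_int Ap + of_int An) (Y2 n + of_int Bp) (Y3 n + of_int Cn) (Y4 n + of_int Dn) = Hs Bn (\<lambda>i. Gb (X n k + 1) (Y1 n + of_int Ap + of_int An) (Y2 n + of_int Bp + of_int i) (Y3 n + of_int Cn) (Y4 n + of_int Dn)) - Hs Bn (\<lambda>i. Gb (X n k) (Y1 n + of_int Ap + of_int An) (Y2 n + of_int Bp + of_int i) (Y3 n + of_int Cn) (Y4 n + of_int Dn))"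
    apply (rule move_b)
      apply (rule U1_ni[of _ n k], simp)
     apply (rule U2_ni[of _ n k], simp)
    subgoal for i by (rule S_good[where n=n and e="Ap + An + Bp - Cn - Dn + i"]) (simp_all add: S_def algebra_simps m0_def mm_def Ap_def Bp_def Cp_def Dp_def An_def Bn_def Cn_def Dn_def max_def min_def split: if_splits)
    done
  have m7: "F0 (X n k) (Y1 n + of_int Ap + of_int An) (Y2 n + of_int Bp + of_int Bn) (Y3 n + of_int Cn + of_int Cp) (Y4 n + of_int Dn) - F0 (X n k) (Y1 n + of_int Ap + of_int An) (Y2 n + of_int Bp + of_int Bn) (Y3 n + of_int Cn) (Y4 n + of_int Dn) = Hs Cp (\<lambda>i. Gc (X n k + 1) (Y1 n + of_int Ap + of_int An) (Y2 n + of_int Bp + of_int Bn) (Y3 n + of_int Cn + of_int i) (Y4 n + of_int Dn)) - Hs Cp (\<lambda>i. Gc (X n k) (Y1 n + of_int Ap + of_int An) (Y2 n + of_int Bp + of_int Bn) (Y3 n + of_int Cn + of_int i) (Y4 n + of_int Dn))"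
    apply (rule move_c)
      apply (rule U1_ni[of _ n k], simp)
     apply (rule U2_ni[of _ n k], simp)
    subgoal for i by (rule S_good[where n=n and e="Ap + An + Bp + Bn - Cn - Dn - i"]) (simp_all add: S_def algebra_simps m0_def mm_def Ap_def Bp_def Cp_def Dp_def An_def Bn_def Cn_def Dn_def max_def min_def split: if_splits)
    done
  have m8: "F0 (X n k) (Y1 n + of_int Ap + of_int An) (Y2 n + of_int Bp + of_int Bn) (Y3 n + of_int Cn + of_int Cp) (Y4 n + of_int Dn + of_int Dp) - F0 (X n k) (Y1 n + of_int Ap + of_int An) (Y2 n + of_int Bp + of_int Bn) (Y3 n + of_int Cn + of_int Cp) (Y4 n + of_int Dn) = Hs Dp (\<lambda>i. Gd (X n k + 1) (Y1 n + of_int Ap + of_int An) (Y2 n + of_int Bp + of_int Bn) (Y3 n + of_int Cn + of_int Cp) (Y4 n + of_int Dn + of_int i)) - Hs Dp (\<lambda>i. Gd (X n k) (Y1 n + of_int Ap + of_int An) (Y2 n + of_int Bp + of_int Bn) (Y3 n + of_int Cn + of_int Cp) (Y4 n + of_int Dn + of_int i))"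
    apply (rule move_d)
      apply (rule U1_ni[of _ n k], simp)
     apply (rule U2_ni[of _ n k], simp)
    subgoal for i by (rule S_good[where n=n and e="Ap + An + Bp + Bn - Cn - Cp - Dn - i"]) (simp_all add: S_def algebra_simps m0_def mm_def Ap_def Bp_def Cp_def Dp_def An_def Bn_def Cn_def Dn_def max_def min_def split: if_splits)
    done
  have m9: "F0 (X n k + of_int K) (Y1 n + of_int Ap + of_int An) (Y2 n + of_int Bp + of_int Bn) (Y3 n + of_int Cn + of_int Cp) (Y4 n + of_int Dn + of_int Dp) - F0 (X n k) (Y1 n + of_int Ap + of_int An) (Y2 n + of_int Bp + of_int Bn) (Y3 n + of_int Cn + of_int Cp) (Y4 n + of_int Dn + of_int Dp) = Hs K (\<lambda>i. F0 (X n k + 1 + of_int i) (Y1 n + of_int Ap + of_int An) (Y2 n + of_int Bp + of_int Bn) (Y3 n + of_int Cn + of_int Cp) (Y4 n + of_int Dn + of_int Dp)) - Hs K (\<lambda>i. F0 (X n k + of_int i) (Y1 n + of_int Ap + of_int An) (Y2 n + of_int Bp + of_int Bn) (Y3 n + of_int Cn + of_int Cp) (Y4 n + of_int Dn + of_int Dp))"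
    by (rule move_k)
  have "GG n (k + 1) - GG n k = (Hs Ap (\<lambda>i. Ga (X n k + 1) (Y1 n + of_int i) (Y2 n) (Y3 n) (Y4 n)) - Hs Ap (\<lambda>i. Ga (X n k) (Y1 n + of_int i) (Y2 n) (Y3 n) (Y4 n))) + (Hs Bp (\<lambda>i. Gb (X n k + 1) (Y1 n + of_int Ap) (Y2 n + of_int i) (Y3 n) (Y4 n)) - Hs Bp (\<lambda>i. Gb (X n k) (Y1 n + of_int Ap) (Y2 n + of_int i) (Y3 n) (Y4 n))) + (Hs Cn (\<lambda>i. Gc (X n k + 1) (Y1 n + of_int Ap) (Y2 n + of_int Bp) (Y3 n + of_int i) (Y4 n)) - Hs Cn (\<lambda>i. Gc (X n k) (Y1 n + of_int Ap) (Y2 n + of_int Bp) (Y3 n + of_int i) (Y4 n))) + (Hs Dn (\<lambda>i. Gd (X n k + 1) (Y1 n + of_int Ap) (Y2 n + of_int Bp) (Y3 n + of_int Cn) (Y4 n + of_int i)) - Hs Dn (\<lambda>i. Gd (X n k) (Y1 n + of_int Ap) (Y2 n + of_int Bp) (Y3 n + of_int Cn) (Y4 n + of_int i))) + (Hs An (\<lambda>i. Ga (X n k + 1) (Y1 n + of_int Ap + of_int i) (Y2 n + of_int Bp) (Y3 n + of_int Cn) (Y4 n + of_int Dn)) - Hs An (\<lambda>i. Ga (X n k) (Y1 n + of_int Ap + of_int i) (Y2 n + of_int Bp) (Y3 n + of_int Cn) (Y4 n + of_int Dn))) + (Hs Bn (\<lambda>i. Gb (X n k + 1) (Y1 n + of_int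 Ap + of_int An) (Y2 n + of_int Bp + of_int i) (Y3 n + of_int Cn) (Y4 n + of_int Dn)) - Hs Bn (\<lambda>i. Gb (X n k) (Y1 n + of_int Ap + of_int An) (Y2 n + of_int Bp + of_int i) (Y3 n + of_int Cn) (Y4 n + of_int Dn))) + (Hs Cp (\<lambda>i. Gc (X n k + 1) (Y1 n + of_int Ap + of_int An) (Y2 n + of_int Bp + of_int Bn) (Y3 n + of_int Cn + of_int i) (Y4 n + of_int Dn)) - Hs Cp (\<lambda>i. Gc (X n k) (Y1 n + of_int Ap + of_int An) (Y2 n + of_int Bp + of_int Bn) (Y3 n + of_int Cn + of_int i) (Y4 n + of_int Dn))) + (Hs Dp (\<lambda>i. Gd (X n k + 1) (Y1 n + of_int Ap + of_int An) (Y2 n + of_int Bp + of_int Bn) (Y3 n + of_int Cn + of_int Cp) (Y4 n + of_int Dn + of_int i)) - Hs Dp (\<lambda>i. Gd (X n k) (Y1 n + of_int Ap + of_int An) (Y2 n + of_int Bp + of_int Bn) (Y3 n + of_int Cn + of_int Cp) (Y4 n + of_int Dn + of_int i))) + (Hs K (\<lambda>i. F0 (X n k + 1 + of_int i) (Y1 n + of_int Ap + of_int An) (Y2 n + of_int Bp + of_int Bn) (Y3 n + of_int Cn + of_int Cp) (Y4 n + of_int Dn + of_int Dp)) - Hs K (\<lambda>i. F0 (X n k + of_int i) (Y1 n + of_int Ap + of_int An) (Y2 n + of_int Bp + of_int Bn) (Y3 n + of_int Cn + of_int Cp) (Y4 n + of_int Dn + of_int Dp)))"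
    unfolding GG_def X_succ by (simp add: algebra_simps)
  also have "\<dots> = (F0 (X n k) (Y1 n + of_int Ap) (Y2 n) (Y3 n) (Y4 n) - F0 (X n k) (Y1 n) (Y2 n) (Y3 n) (Y4 n)) + (F0 (X n k) (Y1 n + of_int Ap) (Y2 n + of_int Bp) (Y3 n) (Y4 n) - F0 (X n k) (Y1 n + of_int Ap) (Y2 n) (Y3 n) (Y4 n)) + (F0 (X n k) (Y1 n + of_int Ap) (Y2 n + of_int Bp) (Y3 n + of_int Cn) (Y4 n) - F0 (X n k) (Y1 n + of_int Ap) (Y2 n + of_int Bp) (Y3 n) (Y4 n)) + (F0 (X n k) (Y1 n + of_int Ap) (Y2 n + of_int Bp) (Y3 n + of_int Cn) (Y4 n + of_int Dn) - F0 (X n k) (Y1 n + of_int Ap) (Y2 n + of_int Bp) (Y3 n + of_int Cn) (Y4 n)) + (F0 (X n k) (Y1 n + of_int Ap + of_int An) (Y2 n + of_int Bp) (Y3 n + of_int Cn) (Y4 n + of_int Dn) - F0 (X n k) (Y1 n + of_int Ap) (Y2 n + of_int Bp) (Y3 n + of_int Cn) (Y4 n + of_int Dn)) + (F0 (X n k) (Y1 n + of_int Ap + of_int An) (Y2 n + of_int Bp + of_int Bn) (Y3 n + of_int Cn) (Y4 n + of_int Dn) - F0 (X n k) (Y1 n + of_int Ap + of_int An) (Y2 n + of_int Bp) (Y3 n + of_int Cn) (Y4 n + of_int Dn)) + (F0 (X n k) (Y1 n + of_int Ap + of_int An) (Y2 n + of_int Bp + of_int Bn) (Y3 n + of_int Cn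 + of_int Cp) (Y4 n + of_int Dn) - F0 (X n k) (Y1 n + of_int Ap + of_int An) (Y2 n + of_int Bp + of_int Bn) (Y3 n + of_int Cn) (Y4 n + of_int Dn)) + (F0 (X n k) (Y1 n + of_int Ap + of_int An) (Y2 n + of_int Bp + of_int Bn) (Y3 n + of_int Cn + of_int Cp) (Y4 n + of_int Dn + of_int Dp) - F0 (X n k) (Y1 n + of_int Ap + of_int An) (Y2 n + of_int Bp + of_int Bn) (Y3 n + of_int Cn + of_int Cp) (Y4 n + of_int Dn)) + (F0 (X n k + of_int K) (Y1 n + of_int Ap + of_int An) (Y2 n + of_int Bp + of_int Bn) (Y3 n + of_int Cn + of_int Cp) (Y4 n + of_int Dn + of_int Dp) - F0 (X n k) (Y1 n + of_int Ap + of_int An) (Y2 n + of_int Bp + of_int Bn) (Y3 n + of_int Cn + of_int Cp) (Y4 n + of_int Dn + of_int Dp))"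
    by (simp only: m1 m2 m3 m4 m5 m6 m7 m8 m9)
  also have "\<dots> = F0 (X n k + of_int K) (Y1 n + of_int Ap + of_int An) (Y2 n + of_int Bp + of_int Bn) (Y3 n + of_int Cn + of_int Cp) (Y4 n + of_int Dn + of_int Dp) - F0 (X n k) (Y1 n) (Y2 n) (Y3 n) (Y4 n)"
    by (simp add: algebra_simps)
  also have "\<dots> = F0 (of_int (K * (n + 1)) + k0 + of_int k) (of_int (A * (n + 1)) + a) (of_int (B * (n + 1)) + b) (of_int (C * (n + 1)) + c) (of_int (D * (n + 1)) + d) - F0 (of_int (K * n) + k0 + of_int k) (of_int (A * n) + a) (of_int (B * n) + b) (of_int (C * n) + c) (of_int (D * n) + d)"
  proof -
    have s: "Ap + An = A" "Bp + Bn = B" "Cn + Cp = C" "Dn + Dp = D" by (simp_all add: Ap_def An_def Bp_def Bn_def Cp_def Cn_def Dp_def Dn_def)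
    have e0: "X n k + of_int K = of_int (K * (n + 1)) + k0 + of_int k" by (simp add: X_def algebra_simps)
    have e1: "Y1 n + of_int Ap + of_int An = of_int (A * (n + 1)) + a"
    proof -
      have "Y1 n + of_int Ap + of_int An = Y1 n + of_int (Ap + An)" by simp
      also have "\<dots> = of_int (A * (n + 1)) + a" using s by (simp add: Y1_def algebra_simps)
      finally show ?thesis .
    qed
    have e2: "Y2 n + of_int Bp + of_int Bn = of_int (B * (n + 1)) + b"
    proof -
      have "Y2 n + of_int Bp + of_int Bn = Y2 n + of_int (Bp + Bn)" by simp
      also have "\<dots> = of_int (B * (n + 1)) + b" using s by (simp add: Y2_def algebra_simps)
      finally show ?thesis .
    qed
    have e3: "Y3 n + of_int Cn + of_int Cp = of_int (C * (n + 1)) + c"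
    proof -
      have "Y3 n + of_int Cn + of_int Cp = Y3 n + of_int (Cn + Cp)" by simp
      also have "\<dots> = of_int (C * (n + 1)) + c" using s by (simp add: Y3_def algebra_simps)
      finally show ?thesis .
    qed
    have e4: "Y4 n + of_int Dn + of_int Dp = of_int (D * (n + 1)) + d"
    proof -
      have "Y4 n + of_int Dn + of_int Dp = Y4 n + of_int (Dn + Dp)" by simp
      also have "\<dots> = of_int (D * (n + 1)) + d" using s by (simp add: Y4_def algebra_simps)
      finally show ?thesis .
    qed
    show ?thesis unfolding e0 e1 e2 e3 e4 unfolding X_def Y1_def Y2_def Y3_def Y4_def ..
  qed
  finally show ?thesis by simp
qed

lemma mate: "has_wz_mate (\<lambda>n k. F0 (of_int (K * n) + k0 + of_int k)
                               (of_int (A * n) + a) (of_int (B * n) + b)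
                               (of_int (C * n) + c) (of_int (D * n) + d))"
  unfolding has_wz_mate_def wz_pair_def
  by (intro exI[of _ GG] conjI hyp_GG allI) (rule wz)

end

theorem theorem1:
  fixes K A B C D :: int and k0 a b c d :: complex
  assumes "\<forall>n k :: int.
      of_int (K * n + k) + k0 + of_int (A * n) + a \<notin> \<int>\<^sub>\<le>\<^sub>0 \<and>
      of_int (K * n + k) + k0 + of_int (B * n) + b \<notin> \<int>\<^sub>\<le>\<^sub>0 \<and>
      (of_int (A * n) + a) + (of_int (B * n) + b) - (of_int (C * n) + c) - (of_int (D * n) + d) + 2
        \<notin> \<int>\<^sub>\<le>\<^sub>0"
  shows "has_wz_mate (\<lambda>n k. F0 (of_int (K * n) + k0 + of_int k)
                               (of_int (A * n) + a) (of_int (B * n) + b)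
                               (of_int (C * n) + c) (of_int (D * n) + d))"
  using wzl.mate[OF wzl.intro[OF assms]] .

end
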